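(* For all $i\in I_d$, the element $\hat x_i^l$ of $\mathcal{S}^f_d$ lies in $F_{l-1}\mathcal{S}^f_d$, and its image $\operatorname{gr}_{l-1}\hat x_i^l$ in $F_{l-1}\mathcal{S}^f_d/F_{l-2}\mathcal{S}^f_d\subseteq\operatorname{gr}\mathcal{S}^f_d$ equals $y_i(l)=\sum_{j=1}^{i-1}(i,j)^{(0)}$.
   Context: Fix a commutative ring $R$ and integers $l,d\ge1$; $I_a=\{1,\dots,a\}$. $\mathcal{S}_d$ is the superalgebra over $R$ generated by even $\hat s_1,\dots,\hat s_{d-1}$, $\hat x_1,\dots,\hat x_d$ and odd $\hat c_1,\dots,\hat c_d$ with relations: the $\hat s_i$ satisfy the Coxeter relations of $\Sigma_d$; the $\hat x_i$ commute; $\hat c_i^2=1$, $\hat c_i\hat c_j=-\hat c_j\hat c_i$ ($i\neq j$); $\hat x_i\hat c_i=-\hat c_i\hat x_i$, $\hat x_i\hat c_j=\hat c_j\hat x_i$ ($j\ne i$); $\hat s_i\hat c_i=\hat c_{i+1}\hat s_i$, $\hat s_i\hat c_j=\hat c_j\hat s_i$ ($j\ne i,i+1$); $\hat s_i\hat x_i=\hat x_{i+1}\hat s_i-1-\hat c_i\hat c_{i+1}$, $\hat s_i\hat x_j=\hat x_j\hat s_i$ ($j\ne i,i+1$). Let $f(x)=x^l+b_{l-2}x^{l-2}+b_{l-4}x^{l-4}+\cdots\in R[x]$ (monic of degree $l$, all terms of the same parity as $l$), and $\mathcal{S}^f_d=\mathcal{S}_d/(f(\hat x_1))$. $F_k\mathcal{S}^f_d$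 is the span of products of generators with at most $k$ polynomial generators $\hat x_j$. The associated graded $\operatorname{gr}\mathcal{S}^f_d$ is identified (via $\hat x_i\mapsto x_i$, $\hat s_i\mapsto(i,i+1)$, $\hat c_i\mapsto c_i$) with the $R$-superalgebra $\mathcal{G}$ free on $\{x_1^{m_1}\cdots x_d^{m_d}wc_1^{e_1}\cdots c_d^{e_d}:0\le m_i\le l-1, w\in\Sigma_d, e_i\in\{0,1\}\}$ with: $x_i$ commuting, $x_i^l=0$; $\Sigma_d$ multiplied as a group (composition right to left); $c_i^2=1$, $c_ic_j=-c_jc_i$; $wx_i=x_{w(i)}w$, $wc_i=c_{w(i)}w$; $x_ic_i=-c_ix_i$, $x_ic_j=c_jx_i$ ($i\neq j$); $\operatorname{gr}_k$ denotes the map $F_k\to F_k/F_{k-1}$. For an ordered tuple $A=(i_1,\dots,i_a)$ of distinct elements of $I_d$, $\sigma_A$ is the cycle $i_1\mapsto\dots\mapsto i_a\mapsto i_1$. For $\alpha\in\mathbb{Z}_2^a$: $|\alpha|=\sum\alpha_j$; $\mathbb{Z}_2^{a,\mathrm{ev}}$ the $\alpha$ with $|\alpha|$ even; $c_\alpha(A)=c_{i_1}^{\alpha_1}\cdots c_{i_a}^{\alpha_a}$; $\epsilon^\alpha_j=\prod_{k<j}(-1)^{\alpha_k}$; $h^\alpha_r(A)=\sum_{r_1+\dots+r_a=(a-1)(l-1)+r,\,r_j\ge0}\prod_j(\epsilon^\alpha_jx_{i_j})^{r_j}$; $A^{(r,\alpha)}=h^\alpha_r(A)\sigma_Ac_\alpha(A)$;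 $\tau_\alpha=(-1)^{|\alpha|/2+\sum_j j\alpha_j}$; $A^{(r)}=\sum_{\alpha\in\mathbb{Z}_2^{a,\mathrm{ev}}}\tau_\alpha A^{(r,\alpha)}$. In particular $(i,j)^{(0)}$ is $A^{(0)}$ for $A=(i,j)$. *)

theory Defs
  imports "HOL-Library.Poly_Mapping" "HOL-Computational_Algebra.Polynomial"
begin

datatype gen = S nat | X nat | C nat

datatype word = Word "gen list"

fun word_list :: "word \<Rightarrow> gen list" where "word_list (Word w) = w"

instantiation word :: monoid_add
begin
definition zero_word :: word where "zero_word = Word []"
definition plus_word :: "word \<Rightarrow> word \<Rightarrow> word" where
  "plus_word u v = Word (word_list u @ word_list v)"
instance
proof
  fix a b c :: word
  show "a + b + c = a + (b + c)" by (cases a; cases b; cases c) (simp add: plus_word_def)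
  show "0 + a = a" by (cases a) (simp add: plus_word_def zero_word_def)
  show "a + 0 = a" by (cases a) (simp add: plus_word_def zero_word_def)
qed
end

text \<open>The free associative R-algebra on the generators: finitely supported R-valued
  functions on words, with the convolution product (a ring_1 by the Poly_Mapping library).\<close>
type_synonym 'r FA = "word \<Rightarrow>\<^sub>0 'r"

definition gen_el :: "gen \<Rightarrow> 'r::comm_ring_1 FA" where
  "gen_el g = Poly_Mapping.single (Word [g]) 1"

definition sc :: "'r \<Rightarrow> 'r::comm_ring_1 FA" where
  "sc r = Poly_Mapping.single (Word []) r"

abbreviation sh :: "nat \<Rightarrow> 'r::comm_ring_1 FA" where "sh i \<equiv> gen_el (S i)"
abbreviation xh :: "nat \<Rightarrow> 'r::comm_ring_1 FA" where "xh i \<equiv> gen_el (X i)"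
abbreviation ch :: "nat \<Rightarrow> 'r::comm_ring_1 FA" where "ch i \<equiv> gen_el (C i)"

text \<open>Generators with indices
  outside the ranges (s_i for i \<notin> 1..d-1, x_i, c_i for i \<notin> 1..d) are killed, so that the
  quotient is exactly the algebra generated by the listed generators.\<close>
definition relators :: "nat \<Rightarrow> 'r::comm_ring_1 poly \<Rightarrow> 'r FA set" where
  "relators d f =
     {sh i | i. i < 1 \<or> i > d - 1} \<union> {xh i | i. i < 1 \<or> i > d} \<union> {ch i | i. i < 1 \<or> i > d}
   \<comment> \<open>Coxeter relations of Sigma_d\<close>
   \<union> {sh i * sh i - 1 | i. 1 \<le> i \<and> i \<le> d - 1}
   \<union> {sh i * sh (i+1) * sh i - sh (i+1) * sh i * sh (i+1) | i. 1 \<le> i \<and> i + 1 \<le> d - 1}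
   \<union> {sh i * sh j - sh j * sh i | i j. 1 \<le> i \<and> i \<le> d - 1 \<and> 1 \<le> j \<and> j \<le> d - 1
                                      \<and> (i + 1 < j \<or> j + 1 < i)}
   \<comment> \<open>polynomial generators commute\<close>
   \<union> {xh i * xh j - xh j * xh i | i j. i \<in> {1..d} \<and> j \<in> {1..d}}
   \<comment> \<open>Clifford relations\<close>
   \<union> {ch i * ch i - 1 | i. i \<in> {1..d}}
   \<union> {ch i * ch j + ch j * ch i | i j. i \<in> {1..d} \<and> j \<in> {1..d} \<and> i \<noteq> j}
   \<comment> \<open>x and c\<close>
   \<union> {xh i * ch i + ch i * xh i | i. i \<in> {1..d}}
   \<union> {xh i * ch j - ch j * xh i | i j. i \<in> {1..d} \<and> j \<in> {1..d} \<and> i \<noteq> j}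
   \<comment> \<open>s and c\<close>
   \<union> {sh i * ch i - ch (i+1) * sh i | i. 1 \<le> i \<and> i \<le> d - 1}
   \<union> {sh i * ch j - ch j * sh i | i j. 1 \<le> i \<and> i \<le> d - 1 \<and> j \<in> {1..d} \<and> j \<noteq> i \<and> j \<noteq> i + 1}
   \<comment> \<open>s and x\<close>
   \<union> {sh i * xh i - (xh (i+1) * sh i - 1 - ch i * ch (i+1)) | i. 1 \<le> i \<and> i \<le> d - 1}
   \<union> {sh i * xh j - xh j * sh i | i j. 1 \<le> i \<and> i \<le> d - 1 \<and> j \<in> {1..d} \<and> j \<noteq> i \<and> j \<noteq> i + 1}
   \<comment> \<open>the cyclotomic-type relation f(hat x_1) = 0\<close>
   \<union> {(\<Sum>k\<le>degree f. sc (coeff f k) * xh 1 ^ k)}"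

inductive_set two_sided_ideal :: "'r::comm_ring_1 FA set \<Rightarrow> 'r FA set" for G where
  gen: "g \<in> G \<Longrightarrow> g \<in> two_sided_ideal G"
| zero: "0 \<in> two_sided_ideal G"
| add: "a \<in> two_sided_ideal G \<Longrightarrow> b \<in> two_sided_ideal G \<Longrightarrow> a + b \<in> two_sided_ideal G"
| lmult: "a \<in> two_sided_ideal G \<Longrightarrow> u * a \<in> two_sided_ideal G"
| rmult: "a \<in> two_sided_ideal G \<Longrightarrow> a * u \<in> two_sided_ideal G"

text \<open>Elements of S^f_d are represented by elements of the free algebra; two represent the
  same element of S^f_d iff their difference lies in the ideal below.\<close>
definition ideal_Sf :: "nat \<Rightarrow> 'r::comm_ring_1 poly \<Rightarrow> 'r FA set" where
  "ideal_Sf d f = two_sided_ideal (relators d f)"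

definition num_x :: "word \<Rightarrow> nat" where
  "num_x w = length (filter (\<lambda>g. case g of X _ \<Rightarrow> True | _ \<Rightarrow> False) (word_list w))"

text \<open>The class of a lies in F_k S^f_d iff a is congruent modulo the ideal to an R-linear
  combination of words (products of generators) with at most k polynomial generators.
  k is an integer, so that F_k = 0 for k < 0.\<close>
definition in_F :: "nat \<Rightarrow> 'r::comm_ring_1 poly \<Rightarrow> int \<Rightarrow> 'r FA \<Rightarrow> bool" where
  "in_F d f k a \<longleftrightarrow> (\<exists>p. (\<forall>w\<in>Poly_Mapping.keys p. int (num_x w) \<le> k) \<and> a - p \<in> ideal_Sf d f)"

definition lprod :: "'r::comm_ring_1 FA list \<Rightarrow> 'r FA" where
  "lprod xs = foldr (*) xs 1"

definition simple_transp :: "nat \<Rightarrow> nat \<Rightarrow> nat" where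
  "simple_transp i = id(i := i + 1, i + 1 := i)"

definition perm_of_word :: "nat list \<Rightarrow> nat \<Rightarrow> nat" where
  "perm_of_word ws = foldr (\<lambda>i p. simple_transp i \<circ> p) ws id"

text \<open>Lift hat w of a permutation w of Sigma_d: the product of the hat s_i along some word
  representing w (all such words give the same element of S_d by the Coxeter relations).\<close>
definition perm_hat :: "nat \<Rightarrow> (nat \<Rightarrow> nat) \<Rightarrow> 'r::comm_ring_1 FA" where
  "perm_hat d w = lprod (map sh (SOME ws. set ws \<subseteq> {1..<d} \<and> perm_of_word ws = w))"

definition cycle_of :: "nat list \<Rightarrow> nat \<Rightarrow> nat" where
  "cycle_of A x = (if x \<in> set A
      then A ! (Suc (THE k. k < length A \<and> A ! k = x) mod length A) else x)"

text \<open>alpha in Z_2^a is a bool list of length a (True = 1).  Indices j are 1-based in the paper;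
  here position k (0-based) corresponds to j = k+1.\<close>
definition abs_alpha :: "bool list \<Rightarrow> nat" where
  "abs_alpha \<alpha> = length (filter id \<alpha>)"

text \<open>epsilon^alpha_j = prod_{k<j} (-1)^{alpha_k}, for 0-based position k0 = j-1.\<close>
definition eps_alpha :: "bool list \<Rightarrow> nat \<Rightarrow> 'r::comm_ring_1" where
  "eps_alpha \<alpha> k0 = (\<Prod>k<k0. (if \<alpha> ! k then -1 else 1))"

definition h_hat :: "nat \<Rightarrow> bool list \<Rightarrow> nat \<Rightarrow> nat list \<Rightarrow> 'r::comm_ring_1 FA" where
  "h_hat l \<alpha> r A =
     (\<Sum>rs\<in>{rs. length rs = length A \<and> sum_list rs = (length A - 1) * (l - 1) + r}.
        lprod (map (\<lambda>k. (sc (eps_alpha \<alpha> k) * xh (A ! k)) ^ (rs ! k)) [0..<length A]))"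

definition c_alpha_hat :: "bool list \<Rightarrow> nat list \<Rightarrow> 'r::comm_ring_1 FA" where
  "c_alpha_hat \<alpha> A = lprod (map (\<lambda>k. if \<alpha> ! k then ch (A ! k) else 1) [0..<length A])"

definition tau_alpha :: "bool list \<Rightarrow> 'r::comm_ring_1" where
  "tau_alpha \<alpha> = (-1) ^ (abs_alpha \<alpha> div 2 + (\<Sum>k<length \<alpha>. if \<alpha> ! k then k + 1 else 0))"

definition A_r_alpha_hat :: "nat \<Rightarrow> nat \<Rightarrow> nat list \<Rightarrow> nat \<Rightarrow> bool list \<Rightarrow> 'r::comm_ring_1 FA" where
  "A_r_alpha_hat d l A r \<alpha> = h_hat l \<alpha> r A * perm_hat d (cycle_of A) * c_alpha_hat \<alpha> A"

definition A_r_hat :: "nat \<Rightarrow> nat \<Rightarrow> nat list \<Rightarrow> nat \<Rightarrow> 'r::comm_ring_1 FA" where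
  "A_r_hat d l A r =
     (\<Sum>\<alpha>\<in>{\<alpha>. length \<alpha> = length A \<and> even (abs_alpha \<alpha>)}. sc (tau_alpha \<alpha>) * A_r_alpha_hat d l A r \<alpha>)"

definition y_hat :: "nat \<Rightarrow> nat \<Rightarrow> nat \<Rightarrow> 'r::comm_ring_1 FA" where
  "y_hat d l i = (\<Sum>j\<in>{1..<i}. A_r_hat d l [i, j] 0)"

end

theory Submission
  imports Defs
begin



lemma Word_Nil_zero: "Word [] = 0" by (simp add: zero_word_def)

lemma sc_mult: "sc (a * b) = (sc a * sc b :: 'r::comm_ring_1 FA)"
  by (simp add: sc_def mult_single Word_Nil_zero)
lemma sc_one[simp]: "sc 1 = (1 :: 'r::comm_ring_1 FA)"
  by (simp add: sc_def Word_Nil_zero)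
lemma sc_zero[simp]: "sc 0 = (0 :: 'r::comm_ring_1 FA)"
  by (simp add: sc_def)
lemma sc_uminus: "sc (- a) = - (sc a :: 'r::comm_ring_1 FA)"
  by (simp add: sc_def single_uminus)
lemma sc_m1[simp]: "sc (-1) = (-1 :: 'r::comm_ring_1 FA)"
  by (simp add: sc_uminus)
lemma sc_power: "sc (a ^ n) = (sc a ^ n :: 'r::comm_ring_1 FA)"
  by (induct n) (simp_all add: sc_mult)

lemma lprod_Nil[simp]: "lprod [] = 1" by (simp add: lprod_def)
lemma lprod_Cons[simp]: "lprod (x # xs) = x * lprod xs" by (simp add: lprod_def)
lemma lprod_append[simp]: "lprod (xs @ ys) = lprod xs * lprod ys"
  by (induct xs) (simp_all add: mult.assoc)

lemma num_x_plus[simp]: "num_x (u + v) = num_x u + num_x v"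
  by (cases u; cases v) (simp add: num_x_def plus_word_def)
lemma num_x_zero[simp]: "num_x 0 = 0"
  by (simp add: num_x_def zero_word_def)

context fixes d :: nat and f :: "'r::comm_ring_1 poly"
begin

abbreviation I where "I \<equiv> ideal_Sf d f"

lemma I_add: "a \<in> I \<Longrightarrow> b \<in> I \<Longrightarrow> a + b \<in> I"
  unfolding ideal_Sf_def by (rule two_sided_ideal.add)
lemma I_zero: "0 \<in> I" unfolding ideal_Sf_def by (rule two_sided_ideal.zero)
lemma I_lmult: "a \<in> I \<Longrightarrow> u * a \<in> I"
  unfolding ideal_Sf_def by (rule two_sided_ideal.lmult)
lemma I_rmult: "a \<in> I \<Longrightarrow> a * u \<in> I"
  unfolding ideal_Sf_def by (rule two_sided_ideal.rmult)
lemma I_gen: "g \<in> relators d f \<Longrightarrow> g \<in> I"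
  unfolding ideal_Sf_def by (rule two_sided_ideal.gen)
lemma I_uminus: "a \<in> I \<Longrightarrow> - a \<in> I"
proof -
  assume "a \<in> I"
  then have "(-1) * a \<in> I" by (rule I_lmult)
  then show ?thesis by simp
qed
lemma I_diff: "a \<in> I \<Longrightarrow> b \<in> I \<Longrightarrow> a - b \<in> I"
proof -
  assume "a \<in> I" "b \<in> I"
  then have "a + - b \<in> I" by (intro I_add I_uminus)
  then show ?thesis by simp
qed
lemma I_sum: "(\<And>x. x \<in> A \<Longrightarrow> g x \<in> I) \<Longrightarrow> sum g A \<in> I"
  by (induct A rule: infinite_finite_induct) (auto intro: I_zero I_add)

definition eqI :: "'r FA \<Rightarrow> 'r FA \<Rightarrow> bool" where "eqI a b \<longleftrightarrow> a - b \<in> I"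

lemma eqI_refl[simp]: "eqI a a" by (simp add: eqI_def I_zero)
lemma eqI_sym: "eqI a b \<Longrightarrow> eqI b a"
  unfolding eqI_def using I_uminus[of "a - b"] by simp
lemma eqI_trans: "eqI a b \<Longrightarrow> eqI b c \<Longrightarrow> eqI a c"
  unfolding eqI_def using I_add[of "a - b" "b - c"] by simp
lemma eqI_add: "eqI a b \<Longrightarrow> eqI a' b' \<Longrightarrow> eqI (a + a') (b + b')"
  unfolding eqI_def using I_add[of "a - b" "a' - b'"] by (simp add: algebra_simps)
lemma eqI_diff: "eqI a b \<Longrightarrow> eqI a' b' \<Longrightarrow> eqI (a - a') (b - b')"
  unfolding eqI_def using I_diff[of "a - b" "a' - b'"] by (simp add: algebra_simps)
lemma eqI_uminus: "eqI a b \<Longrightarrow> eqI (- a) (- b)"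
  unfolding eqI_def using I_uminus[of "a - b"] by (simp add: algebra_simps)
lemma eqI_mult: "eqI a b \<Longrightarrow> eqI a' b' \<Longrightarrow> eqI (a * a') (b * b')"
proof -
  assume "eqI a b" "eqI a' b'"
  then have "(a - b) * a' \<in> I" "b * (a' - b') \<in> I" unfolding eqI_def by (auto intro: I_lmult I_rmult)
  from I_add[OF this] show ?thesis unfolding eqI_def by (simp add: algebra_simps)
qed
lemma eqI_sum: "(\<And>x. x \<in> A \<Longrightarrow> eqI (g x) (h x)) \<Longrightarrow> eqI (sum g A) (sum h A)"
  by (induct A rule: infinite_finite_induct) (auto intro: eqI_add)
lemma eqI_power: "eqI a b \<Longrightarrow> eqI (a ^ n) (b ^ n)"
  by (induct n) (auto intro: eqI_mult)

lemma keys_gen: "Poly_Mapping.keys (gen_el g :: 'r FA) \<subseteq> {Word [g]}"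
  by (simp add: gen_el_def)
lemma keys_sc: "Poly_Mapping.keys (sc r :: 'r FA) \<subseteq> {Word []}"
  by (simp add: sc_def)

lemma F_ideal: "a \<in> I \<Longrightarrow> in_F d f k a"
  unfolding in_F_def by (rule exI[of _ 0]) simp
lemma F_zero[simp]: "in_F d f k 0"
  by (rule F_ideal[OF I_zero])
lemma F_cong: "in_F d f k a \<Longrightarrow> eqI a b \<Longrightarrow> in_F d f k b"
  unfolding in_F_def eqI_def
proof (elim exE conjE)
  fix p assume "\<forall>w\<in>Poly_Mapping.keys p. int (num_x w) \<le> k" "a - p \<in> I" "a - b \<in> I"
  moreover have "b - p = (a - p) - (a - b)" by simp
  ultimately show "\<exists>p. (\<forall>w\<in>Poly_Mapping.keys p. int (num_x w) \<le> k) \<and> b - p \<in> I"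
    using I_diff by metis
qed
lemma F_mono: "in_F d f k a \<Longrightarrow> k \<le> k' \<Longrightarrow> in_F d f k' a"
  unfolding in_F_def by force
lemma F_add: "in_F d f k a \<Longrightarrow> in_F d f k b \<Longrightarrow> in_F d f k (a + b)"
  unfolding in_F_def
proof (elim exE conjE)
  fix p q assume p: "\<forall>w\<in>Poly_Mapping.keys p. int (num_x w) \<le> k" "a - p \<in> I"
    and q: "\<forall>w\<in>Poly_Mapping.keys q. int (num_x w) \<le> k" "b - q \<in> I"
  have "\<forall>w\<in>Poly_Mapping.keys (p + q). int (num_x w) \<le> k"
  proof
    fix w assume "w \<in> Poly_Mapping.keys (p + q)"
    then have "w \<in> Poly_Mapping.keys p \<or> w \<in> Poly_Mapping.keys q" using keys_add[of p q] by auto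
    then show "int (num_x w) \<le> k" using p(1) q(1) by auto
  qed
  moreover have "a + b - (p + q) \<in> I" using I_add[OF p(2) q(2)] by (simp add: algebra_simps)
  ultimately show "\<exists>p. (\<forall>w\<in>Poly_Mapping.keys p. int (num_x w) \<le> k) \<and> a + b - p \<in> I" by blast
qed
lemma F_mult: "in_F d f k a \<Longrightarrow> in_F d f m b \<Longrightarrow> in_F d f (k + m) (a * b)"
  unfolding in_F_def
proof (elim exE conjE)
  fix p q assume p: "\<forall>w\<in>Poly_Mapping.keys p. int (num_x w) \<le> k" "a - p \<in> I"
    and q: "\<forall>w\<in>Poly_Mapping.keys q. int (num_x w) \<le> m" "b - q \<in> I"
  have "\<forall>w\<in>Poly_Mapping.keys (p * q). int (num_x w) \<le> k + m"
  proof
    fix w assume "w \<in> Poly_Mapping.keys (p * q)"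
    then obtain u v where "w = u + v" "u \<in> Poly_Mapping.keys p" "v \<in> Poly_Mapping.keys q"
      using keys_mult by blast
    then have "int (num_x u) \<le> k" "int (num_x v) \<le> m" using p(1) q(1) by auto
    then show "int (num_x w) \<le> k + m" using \<open>w = u + v\<close> by simp
  qed
  moreover have E: "a * b - p * q = (a - p) * b + p * (b - q)" by (simp add: algebra_simps)
  have "(a - p) * b + p * (b - q) \<in> I" by (intro I_add I_rmult I_lmult p(2) q(2))
  then have "a * b - p * q \<in> I" by (simp only: E)
  ultimately show "\<exists>r. (\<forall>w\<in>Poly_Mapping.keys r. int (num_x w) \<le> k + m) \<and> a * b - r \<in> I" by blast
qed
lemma F_sc: "in_F d f 0 (sc r :: 'r FA)"
  unfolding in_F_def by (rule exI[of _ "sc r"]) (use keys_sc[of r] in \<open>auto simp: I_zero num_x_def\<close>)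
lemma F_uminus: "in_F d f k a \<Longrightarrow> in_F d f k (- a)"
proof -
  assume "in_F d f k a"
  from F_mult[OF F_sc[of "-1"] this] have "in_F d f (0 + k) (sc (-1) * a)" .
  then show ?thesis by simp
qed
lemma F_diff: "in_F d f k a \<Longrightarrow> in_F d f k b \<Longrightarrow> in_F d f k (a - b)"
proof -
  assume "in_F d f k a" "in_F d f k b"
  then have "in_F d f k (a + - b)" by (intro F_add F_uminus)
  then show ?thesis by simp
qed
lemma F_sum: "(\<And>x. x \<in> A \<Longrightarrow> in_F d f k (g x)) \<Longrightarrow> in_F d f k (sum g A)"
  by (induct A rule: infinite_finite_induct) (auto intro: F_add)
lemma F_gen: "in_F d f (int (num_x (Word [g]))) (gen_el g :: 'r FA)"
  unfolding in_F_def by (rule exI[of _ "gen_el g"]) (use keys_gen[of g] in \<open>auto simp: I_zero\<close>)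
lemma F_x: "in_F d f 1 (xh j :: 'r FA)"
  using F_gen[of "X j"] by (simp add: num_x_def)
lemma F_s: "in_F d f 0 (sh j :: 'r FA)"
  using F_gen[of "S j"] by (simp add: num_x_def)
lemma F_c: "in_F d f 0 (ch j :: 'r FA)"
  using F_gen[of "C j"] by (simp add: num_x_def)
lemma F_one: "in_F d f 0 (1 :: 'r FA)"
  using F_sc[of 1] by simp
lemma F_power: "in_F d f k a \<Longrightarrow> in_F d f (int n * k) (a ^ n)"
proof (induct n)
  case 0 then show ?case using F_one by simp
next
  case (Suc n)
  then show ?case using F_mult[OF Suc(2) Suc(1)[OF Suc(2)]] by (simp add: algebra_simps)
qed

end



lemma perm_of_word_append: "perm_of_word (a @ b) = perm_of_word a \<circ> perm_of_word b"
  by (induct a) (simp_all add: perm_of_word_def)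
lemma perm_of_word_Nil[simp]: "perm_of_word [] = id" by (simp add: perm_of_word_def)
lemma perm_of_word_Cons: "perm_of_word (i # a) = simple_transp i \<circ> perm_of_word a"
  by (simp add: perm_of_word_def)
lemma st_inv: "simple_transp i \<circ> simple_transp i = id"
  by (auto simp: simple_transp_def fun_eq_iff)
lemma st_bij: "bij (simple_transp i)"
  using st_inv by (metis o_bij)
lemma perm_of_word_bij: "bij (perm_of_word ws)"
proof (induct ws)
  case Nil then show ?case by (simp add: bij_id[unfolded id_def])
next
  case (Cons a ws)
  have "bij (simple_transp a \<circ> perm_of_word ws)" by (rule bij_comp[OF Cons st_bij])
  then show ?case by (simp only: perm_of_word_Cons)
qed
lemma perm_of_word_fix: "set ws \<subseteq> {1..<m} \<Longrightarrow> m < x \<Longrightarrow> perm_of_word ws x = x"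
  by (induct ws) (auto simp: perm_of_word_Cons simple_transp_def)

definition chain :: "nat \<Rightarrow> nat \<Rightarrow> nat list" where "chain m k = rev [k..<Suc m]"

lemma chain_top: "chain m (Suc m) = []" by (simp add: chain_def)
lemma chain_step: "k \<le> m \<Longrightarrow> chain m k = chain m (Suc k) @ [k]"
  by (simp add: chain_def upt_conv_Cons)
lemma chain_set: "set (chain m k) = {k..m}" by (auto simp: chain_def)

lemma chain_perm: "1 \<le> k \<Longrightarrow> k \<le> Suc m \<Longrightarrow> perm_of_word (chain m k) k = Suc m"
proof (induct "Suc m - k" arbitrary: k)
  case 0 then have "k = Suc m" by simp
  then show ?case by (simp add: chain_top)
next
  case (Suc n)
  then have "k \<le> m" by simp
  then have "perm_of_word (chain m k) k = perm_of_word (chain m (Suc k)) (Suc k)"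
    by (simp add: chain_step perm_of_word_append perm_of_word_Cons simple_transp_def)
  also have "\<dots> = Suc m" using Suc by simp
  finally show ?case .
qed

lemma chain_split: "k < i \<Longrightarrow> i \<le> m \<Longrightarrow>
  chain m k = chain m (Suc i) @ [i, i - 1] @ rev [k..<i - 1]"
proof -
  assume a: "k < i" "i \<le> m"
  have "[k..<Suc m] = [k..<i-1] @ [i-1..<(i-1) + (Suc m - (i-1))]"
    using upt_add_eq_append[of k "i-1" "Suc m - (i-1)"] a by simp
  then have "[k..<Suc m] = [k..<i-1] @ [i-1..<Suc m]" using a by simp
  moreover have "[i-1..<Suc m] = (i-1) # [i..<Suc m]" using a by (simp add: upt_conv_Cons)
  moreover have "[i..<Suc m] = i # [Suc i..<Suc m]" using a by (simp add: upt_conv_Cons)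
  ultimately show ?thesis by (simp add: chain_def)
qed

context fixes d :: nat and f :: "'r::comm_ring_1 poly"
begin

definition sw :: "nat list \<Rightarrow> 'r FA" where "sw ws = lprod (map sh ws)"
definition WE :: "nat list \<Rightarrow> nat list \<Rightarrow> bool" where
  "WE a b \<longleftrightarrow> eqI d f (sw a) (sw b) \<and> perm_of_word a = perm_of_word b"

lemma sw_append: "sw (a @ b) = sw a * sw b" by (simp add: sw_def)
lemma sw_Cons: "sw (i # a) = sh i * sw a" by (simp add: sw_def)
lemma sw_Nil: "sw [] = 1" by (simp add: sw_def)

lemma WE_refl[simp]: "WE a a" by (simp add: WE_def)
lemma WE_sym: "WE a b \<Longrightarrow> WE b a" unfolding WE_def using eqI_sym by metis
lemma WE_trans: "WE a b \<Longrightarrow> WE b c \<Longrightarrow> WE a c" unfolding WE_def using eqI_trans by metis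
lemma WE_app: "WE a b \<Longrightarrow> WE c e \<Longrightarrow> WE (a @ c) (b @ e)"
  unfolding WE_def sw_append perm_of_word_append using eqI_mult by metis

lemma rel_ss: "1 \<le> i \<Longrightarrow> i \<le> d - 1 \<Longrightarrow> eqI d f (sh i * sh i) 1"
proof -
  assume "1 \<le> i" "i \<le> d - 1"
  then have m: "sh i * sh i - 1 \<in> {sh i * sh i - 1 | i. 1 \<le> i \<and> i \<le> d - 1}" by blast
  have "sh i * sh i - 1 \<in> relators d f" unfolding relators_def Un_iff by (simp only: m simp_thms)
  then show ?thesis unfolding eqI_def by (rule I_gen)
qed
lemma rel_braid: "1 \<le> i \<Longrightarrow> i + 1 \<le> d - 1 \<Longrightarrow>
  eqI d f (sh i * sh (i+1) * sh i) (sh (i+1) * sh i * sh (i+1))"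
proof -
  assume "1 \<le> i" "i + 1 \<le> d - 1"
  then have m: "sh i * sh (i+1) * sh i - sh (i+1) * sh i * sh (i+1) \<in> {sh i * sh (i+1) * sh i - sh (i+1) * sh i * sh (i+1) | i. 1 \<le> i \<and> i + 1 \<le> d - 1}" by blast
  have "sh i * sh (i+1) * sh i - sh (i+1) * sh i * sh (i+1) \<in> relators d f" unfolding relators_def Un_iff by (simp only: m simp_thms)
  then show ?thesis unfolding eqI_def by (rule I_gen)
qed
lemma rel_comm: "1 \<le> i \<Longrightarrow> i \<le> d - 1 \<Longrightarrow> 1 \<le> j \<Longrightarrow> j \<le> d - 1 \<Longrightarrow> (i + 1 < j \<or> j + 1 < i) \<Longrightarrow>
  eqI d f (sh i * sh j) (sh j * sh i)"
proof -
  assume "1 \<le> i" "i \<le> d - 1" "1 \<le> j" "j \<le> d - 1" "(i + 1 < j \<or> j + 1 < i)"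
  then have m: "sh i * sh j - sh j * sh i \<in> {sh i * sh j - sh j * sh i | i j. 1 \<le> i \<and> i \<le> d - 1 \<and> 1 \<le> j \<and> j \<le> d - 1 \<and> (i + 1 < j \<or> j + 1 < i)}" by blast
  have "sh i * sh j - sh j * sh i \<in> relators d f" unfolding relators_def Un_iff by (simp only: m simp_thms)
  then show ?thesis unfolding eqI_def by (rule I_gen)
qed

lemma WE_ss: "i \<in> {1..<d} \<Longrightarrow> WE [i, i] []"
proof -
  assume "i \<in> {1..<d}"
  then have "eqI d f (sh i * sh i) 1" by (intro rel_ss) auto
  moreover have "perm_of_word [i, i] = perm_of_word []"
    by (simp add: perm_of_word_Cons st_inv)
  ultimately show ?thesis unfolding WE_def by (simp add: sw_def)
qed
lemma WE_braid: "1 \<le> i \<Longrightarrow> i + 1 < d \<Longrightarrow> WE [i, i+1, i] [i+1, i, i+1]"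
proof -
  assume "1 \<le> i" "i + 1 < d"
  then have "eqI d f (sh i * sh (i+1) * sh i) (sh (i+1) * sh i * sh (i+1))" by (intro rel_braid) auto
  moreover have "perm_of_word [i, i+1, i] = perm_of_word [i+1, i, i+1]"
    by (simp add: perm_of_word_Cons simple_transp_def fun_eq_iff)
  ultimately show ?thesis unfolding WE_def by (simp add: sw_def mult.assoc)
qed
lemma WE_comm: "i \<in> {1..<d} \<Longrightarrow> j \<in> {1..<d} \<Longrightarrow> (i + 1 < j \<or> j + 1 < i) \<Longrightarrow> WE [i, j] [j, i]"
proof -
  assume a: "i \<in> {1..<d}" "j \<in> {1..<d}" "(i + 1 < j \<or> j + 1 < i)"
  then have "eqI d f (sh i * sh j) (sh j * sh i)" by (intro rel_comm) auto
  moreover have "perm_of_word [i, j] = perm_of_word [j, i]"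
    using a(3) by (auto simp add: perm_of_word_Cons simple_transp_def fun_eq_iff)
  ultimately show ?thesis unfolding WE_def by (simp add: sw_def)
qed

lemma WE_through: "set L \<subseteq> {1..<d} \<Longrightarrow> i \<in> {1..<d} \<Longrightarrow> (\<forall>x\<in>set L. x + 1 < i \<or> i + 1 < x) \<Longrightarrow>
  WE (L @ [i]) (i # L)"
proof (induct L)
  case Nil then show ?case by simp
next
  case (Cons x L)
  then have "WE (x # (L @ [i])) (x # i # L)" using WE_app[of "[x]" "[x]"] by simp
  moreover have "WE ([x, i] @ L) ([i, x] @ L)" using Cons by (intro WE_app WE_comm) auto
  ultimately show ?case by (auto intro: WE_trans)
qed

lemma chain_app: "1 \<le> m \<Longrightarrow> m < d \<Longrightarrow> i \<in> {1..m} \<Longrightarrow> 1 \<le> k \<Longrightarrow> k \<le> Suc m \<Longrightarrow>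
  \<exists>w0 k'. set w0 \<subseteq> {1..<m} \<and> 1 \<le> k' \<and> k' \<le> Suc m \<and> WE (chain m k @ [i]) (w0 @ chain m k')"
proof -
  assume m: "1 \<le> m" "m < d" and i: "i \<in> {1..m}" and k: "1 \<le> k" "k \<le> Suc m"
  show ?thesis
  proof (cases "k = Suc m")
    case True
    show ?thesis
    proof (cases "i = m")
      case True
      then show ?thesis using \<open>k = Suc m\<close> m
        by (intro exI[of _ "[]"] exI[of _ m]) (simp add: chain_top chain_step)
    next
      case False
      then show ?thesis using \<open>k = Suc m\<close> m i
        by (intro exI[of _ "[i]"] exI[of _ "Suc m"]) (simp add: chain_top)
    qed
  next
    case False
    then have km: "k \<le> m" using k by simp
    consider "i = k" | "Suc i = k" | "Suc i < k" | "k < i" by linarith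
    then show ?thesis
    proof cases
      case 1
      have "WE (chain m (Suc k) @ [k, k]) (chain m (Suc k) @ [])"
        using m km k by (intro WE_app WE_ss) auto
      then show ?thesis using 1 km k
        by (intro exI[of _ "[]"] exI[of _ "Suc k"]) (simp add: chain_step)
    next
      case 2
      then show ?thesis using km k i
        by (intro exI[of _ "[]"] exI[of _ i]) (simp add: chain_step[of i m])
    next
      case 3
      have "WE (chain m k @ [i]) (i # chain m k)"
        using 3 m km i by (intro WE_through) (auto simp: chain_set)
      then show ?thesis using 3 km k i
        by (intro exI[of _ "[i]"] exI[of _ k]) simp
    next
      case 4
      define A where "A = chain m (Suc i)"
      define B where "B = rev [k..<i - 1]"
      have split: "chain m k = A @ [i, i - 1] @ B" using chain_split[OF 4] i unfolding A_def B_def by simp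
      have i2: "2 \<le> i" using 4 k by simp
      have setA: "\<forall>x\<in>set A. Suc i \<le> x \<and> x \<le> m" by (simp add: A_def chain_set)
      have setB: "\<forall>x\<in>set B. k \<le> x \<and> x < i - 1" by (simp add: B_def)
      have iI: "i \<in> {1..<d}" using i m by simp
      have im: "i \<le> m" using i by simp
      have i1I: "i - 1 \<in> {1..<d}" unfolding atLeastLessThan_iff using i2 im m by linarith
      have Bd: "set B \<subseteq> {1..<d}" using setB k i m by auto
      have Bi: "\<forall>x\<in>set B. x + 1 < i \<or> i + 1 < x" using setB by auto
      have Ad: "set A \<subseteq> {1..<d}" using setA m by auto
      have Ai: "\<forall>x\<in>set A. x + 1 < i - 1 \<or> i - 1 + 1 < x" using setA i2 by auto
      have E1: "WE (B @ [i]) (i # B)" by (rule WE_through[OF Bd iI Bi])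
      have E1': "WE (A @ [i, i - 1] @ (B @ [i])) (A @ [i, i - 1] @ (i # B))"
        by (rule WE_app[OF WE_refl WE_app[OF WE_refl E1]])
      have c1: "1 \<le> i - 1" using i2 by linarith
      have c2: "i - 1 + 1 < d" using i2 im m by linarith
      have ii: "i - 1 + 1 = i" using i2 by linarith
      have "WE [i - 1, i - 1 + 1, i - 1] [i - 1 + 1, i - 1, i - 1 + 1]" by (rule WE_braid[OF c1 c2])
      then have E2: "WE [i, i - 1, i] [i - 1, i, i - 1]" unfolding ii by (rule WE_sym)
      have E2': "WE (A @ [i, i - 1, i] @ B) (A @ [i - 1, i, i - 1] @ B)"
        by (rule WE_app[OF WE_refl WE_app[OF E2 WE_refl]])
      have E3: "WE (A @ [i - 1]) ((i - 1) # A)" by (rule WE_through[OF Ad i1I Ai])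
      have E3': "WE ((A @ [i - 1]) @ [i, i - 1] @ B) (((i - 1) # A) @ [i, i - 1] @ B)"
        by (rule WE_app[OF E3 WE_refl])
      have eq1: "A @ [i, i - 1] @ (i # B) = A @ [i, i - 1, i] @ B" by simp
      have eq2: "A @ [i - 1, i, i - 1] @ B = (A @ [i - 1]) @ [i, i - 1] @ B" by simp
      have eq3: "((i - 1) # A) @ [i, i - 1] @ B = [i - 1] @ chain m k" unfolding split by simp
      have eq0: "chain m k @ [i] = A @ [i, i - 1] @ (B @ [i])" unfolding split by simp
      have "WE (A @ [i, i - 1] @ (B @ [i])) (A @ [i - 1, i, i - 1] @ B)"
        using WE_trans[OF E1'[unfolded eq1] E2'] .
      then have W: "WE (chain m k @ [i]) ([i - 1] @ chain m k)"
        using WE_trans[OF _ E3'] unfolding eq0 eq2 eq3 by blast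
      have s1: "set [i - 1] \<subseteq> {1..<m}" using i2 i by auto
      show ?thesis by (rule exI[of _ "[i - 1]"], rule exI[of _ k], intro conjI s1 k(1) k(2) W)
    qed
  qed
qed

lemma normal_form: "1 \<le> m \<Longrightarrow> m < d \<Longrightarrow> set ws \<subseteq> {1..m} \<Longrightarrow>
  \<exists>w k. set w \<subseteq> {1..<m} \<and> 1 \<le> k \<and> k \<le> Suc m \<and> WE ws (w @ chain m k)"
proof (induct ws rule: rev_induct)
  case Nil then show ?case by (intro exI[of _ "[]"] exI[of _ "Suc m"]) (simp add: chain_top)
next
  case (snoc i ws)
  then obtain w k where w: "set w \<subseteq> {1..<m}" "1 \<le> k" "k \<le> Suc m" "WE ws (w @ chain m k)" by auto
  obtain w0 k' where w0: "set w0 \<subseteq> {1..<m}" "1 \<le> k'" "k' \<le> Suc m" "WE (chain m k @ [i]) (w0 @ chain m k')"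
    using chain_app[of m i k] snoc w by auto
  have "WE (ws @ [i]) ((w @ chain m k) @ [i])" by (rule WE_app[OF w(4) WE_refl])
  moreover have "WE (w @ (chain m k @ [i])) (w @ (w0 @ chain m k'))" by (rule WE_app[OF WE_refl w0(4)])
  ultimately have "WE (ws @ [i]) ((w @ w0) @ chain m k')" by (auto elim: WE_trans)
  then show ?case using w w0 by (intro exI[of _ "w @ w0"] exI[of _ k']) auto
qed

lemma coxeter_aux: "n \<le> d \<Longrightarrow> set ws1 \<subseteq> {1..<n} \<Longrightarrow> set ws2 \<subseteq> {1..<n} \<Longrightarrow>
  perm_of_word ws1 = perm_of_word ws2 \<Longrightarrow> WE ws1 ws2"
proof (induct n arbitrary: ws1 ws2)
  case 0 then show ?case by simp
next
  case (Suc m)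
  show ?case
  proof (cases "m = 0")
    case True then show ?thesis using Suc by simp
  next
    case False
    have sets: "set ws1 \<subseteq> {1..m}" "set ws2 \<subseteq> {1..m}" using Suc by auto
    obtain w1 k1 where 1: "set w1 \<subseteq> {1..<m}" "1 \<le> k1" "k1 \<le> Suc m" "WE ws1 (w1 @ chain m k1)"
      using normal_form[OF _ _ sets(1)] False Suc by auto
    obtain w2 k2 where 2: "set w2 \<subseteq> {1..<m}" "1 \<le> k2" "k2 \<le> Suc m" "WE ws2 (w2 @ chain m k2)"
      using normal_form[OF _ _ sets(2)] False Suc by auto
    define P where "P = perm_of_word ws1"
    have P1: "P = perm_of_word (w1 @ chain m k1)" and P2: "P = perm_of_word (w2 @ chain m k2)"
      using 1(4) 2(4) Suc(5) unfolding P_def WE_def by auto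
    have "P k1 = Suc m" unfolding P1 perm_of_word_append using chain_perm[OF 1(2,3)] perm_of_word_fix[OF 1(1)] by simp
    moreover have "P k2 = Suc m" unfolding P2 perm_of_word_append using chain_perm[OF 2(2,3)] perm_of_word_fix[OF 2(1)] by simp
    moreover have "inj P" unfolding P_def using perm_of_word_bij bij_is_inj by blast
    ultimately have "k1 = k2" by (metis injD)
    then have "perm_of_word w1 \<circ> perm_of_word (chain m k1) = perm_of_word w2 \<circ> perm_of_word (chain m k1)"
      using P1 P2 by (simp add: perm_of_word_append)
    then have "perm_of_word w1 = perm_of_word w2"
      using perm_of_word_bij[of "chain m k1"] by (metis bij_is_surj surj_fun_eq)
    then have "WE w1 w2" using Suc 1 2 by auto
    then have "WE (w1 @ chain m k1) (w2 @ chain m k2)" using \<open>k1 = k2\<close> by (intro WE_app) auto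
    then show ?thesis using 1 2 by (meson WE_sym WE_trans)
  qed
qed

end



context fixes d :: nat and f :: "'r::comm_ring_1 poly"
begin

abbreviation EQ :: "int \<Rightarrow> 'r FA \<Rightarrow> 'r FA \<Rightarrow> bool" where "EQ k a b \<equiv> in_F d f k (a - b)"

lemma EQ_refl: "EQ k a a" by simp
lemma EQ_sym: "EQ k a b \<Longrightarrow> EQ k b a"
proof -
  assume "EQ k a b"
  from F_uminus[OF this] show ?thesis by simp
qed
lemma EQ_trans: "EQ k a b \<Longrightarrow> EQ k b c \<Longrightarrow> EQ k a c"
proof -
  assume "EQ k a b" "EQ k b c"
  from F_add[OF this] show ?thesis by simp
qed
lemma EQ_add: "EQ k a b \<Longrightarrow> EQ k a' b' \<Longrightarrow> EQ k (a + a') (b + b')"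
proof -
  assume "EQ k a b" "EQ k a' b'"
  from F_add[OF this] show ?thesis by (simp add: algebra_simps)
qed
lemma EQ_diff: "EQ k a b \<Longrightarrow> EQ k a' b' \<Longrightarrow> EQ k (a - a') (b - b')"
proof -
  assume "EQ k a b" "EQ k a' b'"
  from F_diff[OF this] show ?thesis by (simp add: algebra_simps)
qed
lemma EQ_uminus: "EQ k a b \<Longrightarrow> EQ k (- a) (- b)"
proof -
  assume "EQ k a b"
  from F_uminus[OF this] show ?thesis by (simp add: algebra_simps)
qed
lemma EQ_lmult: "in_F d f m c \<Longrightarrow> EQ k a b \<Longrightarrow> EQ (m + k) (c * a) (c * b)"
proof -
  assume "in_F d f m c" "EQ k a b"
  from F_mult[OF this] show ?thesis by (simp add: algebra_simps)
qed
lemma EQ_rmult: "EQ k a b \<Longrightarrow> in_F d f m c \<Longrightarrow> EQ (k + m) (a * c) (b * c)"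
proof -
  assume "EQ k a b" "in_F d f m c"
  from F_mult[OF this] show ?thesis by (simp add: algebra_simps)
qed
lemma EQ_mono: "EQ k a b \<Longrightarrow> k \<le> k' \<Longrightarrow> EQ k' a b"
  by (rule F_mono)
lemma EQ_eqI: "eqI d f a b \<Longrightarrow> EQ k a b"
  unfolding eqI_def by (rule F_ideal)
lemma EQ_sum: "(\<And>x. x \<in> A \<Longrightarrow> EQ k (g x) (h x)) \<Longrightarrow> EQ k (sum g A) (sum h A)"
proof -
  assume "\<And>x. x \<in> A \<Longrightarrow> EQ k (g x) (h x)"
  then have "in_F d f k (\<Sum>x\<in>A. g x - h x)" by (rule F_sum)
  then show ?thesis by (simp add: sum_subtractf)
qed
lemma F_EQ: "in_F d f k a \<Longrightarrow> EQ k a b \<Longrightarrow> in_F d f k b"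
proof -
  assume "in_F d f k a" "EQ k a b"
  from F_diff[OF this] show ?thesis by simp
qed

lemma F_lprod: "(\<And>x. x \<in> set xs \<Longrightarrow> in_F d f 0 x) \<Longrightarrow> in_F d f 0 (lprod xs)"
proof (induct xs)
  case Nil then show ?case using F_one by simp
next
  case (Cons a xs)
  then have "in_F d f (0 + 0) (a * lprod xs)" by (intro F_mult) auto
  then show ?case by simp
qed
lemma F_sw: "in_F d f 0 (sw ws)"
  unfolding sw_def by (rule F_lprod) (auto intro: F_s)
lemma F_perm_hat: "in_F d f 0 (perm_hat d p)"
  unfolding perm_hat_def by (rule F_lprod) (auto intro: F_s)

lemma F_mult0: "in_F d f 0 a \<Longrightarrow> in_F d f 0 b \<Longrightarrow> in_F d f 0 (a * b)"
proof -
  assume "in_F d f 0 a" "in_F d f 0 b"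
  from F_mult[OF this] show ?thesis by simp
qed

lemma rel_cc: "i \<in> {1..d} \<Longrightarrow> eqI d f (ch i * ch i) 1"
proof -
  assume "i \<in> {1..d}"
  then have m: "ch i * ch i - 1 \<in> {ch i * ch i - 1 | i. i \<in> {1..d}}" by blast
  have "ch i * ch i - 1 \<in> relators d f" unfolding relators_def Un_iff by (simp only: m simp_thms)
  then show ?thesis unfolding eqI_def by (rule I_gen)
qed
lemma rel_cc2: "i \<in> {1..d} \<Longrightarrow> j \<in> {1..d} \<Longrightarrow> i \<noteq> j \<Longrightarrow> eqI d f (ch i * ch j) (- (ch j * ch i))"
proof -
  assume "i \<in> {1..d}" "j \<in> {1..d}" "i \<noteq> j"
  then have m: "ch i * ch j + ch j * ch i \<in> {ch i * ch j + ch j * ch i | i j. i \<in> {1..d} \<and> j \<in> {1..d} \<and> i \<noteq> j}" by blast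
  have "ch i * ch j + ch j * ch i \<in> relators d f" unfolding relators_def Un_iff by (simp only: m simp_thms)
  then show ?thesis unfolding eqI_def diff_minus_eq_add by (rule I_gen)
qed
lemma rel_xx: "i \<in> {1..d} \<Longrightarrow> j \<in> {1..d} \<Longrightarrow> eqI d f (xh i * xh j) (xh j * xh i)"
proof -
  assume "i \<in> {1..d}" "j \<in> {1..d}"
  then have m: "xh i * xh j - xh j * xh i \<in> {xh i * xh j - xh j * xh i | i j. i \<in> {1..d} \<and> j \<in> {1..d}}" by blast
  have "xh i * xh j - xh j * xh i \<in> relators d f" unfolding relators_def Un_iff by (simp only: m simp_thms)
  then show ?thesis unfolding eqI_def by (rule I_gen)
qed
lemma rel_xc1: "i \<in> {1..d} \<Longrightarrow> eqI d f (xh i * ch i) (- (ch i * xh i))"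
proof -
  assume "i \<in> {1..d}"
  then have m: "xh i * ch i + ch i * xh i \<in> {xh i * ch i + ch i * xh i | i. i \<in> {1..d}}" by blast
  have "xh i * ch i + ch i * xh i \<in> relators d f" unfolding relators_def Un_iff by (simp only: m simp_thms)
  then show ?thesis unfolding eqI_def diff_minus_eq_add by (rule I_gen)
qed
lemma rel_xc2: "i \<in> {1..d} \<Longrightarrow> j \<in> {1..d} \<Longrightarrow> i \<noteq> j \<Longrightarrow> eqI d f (xh i * ch j) (ch j * xh i)"
proof -
  assume "i \<in> {1..d}" "j \<in> {1..d}" "i \<noteq> j"
  then have m: "xh i * ch j - ch j * xh i \<in> {xh i * ch j - ch j * xh i | i j. i \<in> {1..d} \<and> j \<in> {1..d} \<and> i \<noteq> j}" by blast
  have "xh i * ch j - ch j * xh i \<in> relators d f" unfolding relators_def Un_iff by (simp only: m simp_thms)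
  then show ?thesis unfolding eqI_def by (rule I_gen)
qed
lemma rel_sc1: "1 \<le> i \<Longrightarrow> i \<le> d - 1 \<Longrightarrow> eqI d f (sh i * ch i) (ch (i+1) * sh i)"
proof -
  assume "1 \<le> i" "i \<le> d - 1"
  then have m: "sh i * ch i - ch (i+1) * sh i \<in> {sh i * ch i - ch (i+1) * sh i | i. 1 \<le> i \<and> i \<le> d - 1}" by blast
  have "sh i * ch i - ch (i+1) * sh i \<in> relators d f" unfolding relators_def Un_iff by (simp only: m simp_thms)
  then show ?thesis unfolding eqI_def by (rule I_gen)
qed
lemma rel_sc2: "1 \<le> i \<Longrightarrow> i \<le> d - 1 \<Longrightarrow> j \<in> {1..d} \<Longrightarrow> j \<noteq> i \<Longrightarrow> j \<noteq> i + 1 \<Longrightarrow>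
  eqI d f (sh i * ch j) (ch j * sh i)"
proof -
  assume "1 \<le> i" "i \<le> d - 1" "j \<in> {1..d}" "j \<noteq> i" "j \<noteq> i + 1"
  then have m: "sh i * ch j - ch j * sh i \<in> {sh i * ch j - ch j * sh i | i j. 1 \<le> i \<and> i \<le> d - 1 \<and> j \<in> {1..d} \<and> j \<noteq> i \<and> j \<noteq> i + 1}" by blast
  have "sh i * ch j - ch j * sh i \<in> relators d f" unfolding relators_def Un_iff by (simp only: m simp_thms)
  then show ?thesis unfolding eqI_def by (rule I_gen)
qed
lemma rel_sx1: "1 \<le> i \<Longrightarrow> i \<le> d - 1 \<Longrightarrow> eqI d f (sh i * xh i) (xh (i+1) * sh i - 1 - ch i * ch (i+1))"
proof -
  assume "1 \<le> i" "i \<le> d - 1"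
  then have m: "sh i * xh i - (xh (i+1) * sh i - 1 - ch i * ch (i+1)) \<in> {sh i * xh i - (xh (i+1) * sh i - 1 - ch i * ch (i+1)) | i. 1 \<le> i \<and> i \<le> d - 1}" by blast
  have "sh i * xh i - (xh (i+1) * sh i - 1 - ch i * ch (i+1)) \<in> relators d f" unfolding relators_def Un_iff by (simp only: m simp_thms)
  then show ?thesis unfolding eqI_def by (rule I_gen)
qed
lemma rel_sx2: "1 \<le> i \<Longrightarrow> i \<le> d - 1 \<Longrightarrow> j \<in> {1..d} \<Longrightarrow> j \<noteq> i \<Longrightarrow> j \<noteq> i + 1 \<Longrightarrow>
  eqI d f (sh i * xh j) (xh j * sh i)"
proof -
  assume "1 \<le> i" "i \<le> d - 1" "j \<in> {1..d}" "j \<noteq> i" "j \<noteq> i + 1"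
  then have m: "sh i * xh j - xh j * sh i \<in> {sh i * xh j - xh j * sh i | i j. 1 \<le> i \<and> i \<le> d - 1 \<and> j \<in> {1..d} \<and> j \<noteq> i \<and> j \<noteq> i + 1}" by blast
  have "sh i * xh j - xh j * sh i \<in> relators d f" unfolding relators_def Un_iff by (simp only: m simp_thms)
  then show ?thesis unfolding eqI_def by (rule I_gen)
qed
lemma rel_f: "eqI d f (\<Sum>k\<le>degree f. sc (coeff f k) * xh 1 ^ k) 0"
proof -
  have m: "(\<Sum>k\<le>degree f. sc (coeff f k) * xh 1 ^ k) \<in> {(\<Sum>k\<le>degree f. sc (coeff f k) * xh 1 ^ k)}" by simp
  have "(\<Sum>k\<le>degree f. sc (coeff f k) * (xh 1 :: 'r FA) ^ k) \<in> relators d f" unfolding relators_def Un_iff by (simp only: m simp_thms)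
  then show ?thesis unfolding eqI_def by (simp add: I_gen)
qed

end



lemma pm1_central: "((-1::'r::comm_ring_1 FA) ^ n) * a = a * (-1) ^ n"
  by (cases "even n") simp_all

context fixes d :: nat and f :: "'r::comm_ring_1 poly"
begin

abbreviation EQ' :: "int \<Rightarrow> 'r FA \<Rightarrow> 'r FA \<Rightarrow> bool" where "EQ' k a b \<equiv> in_F d f k (a - b)"

lemma eqI_flip: "eqI d f (s * s) 1 \<Longrightarrow> eqI d f (s * a) (b * s) \<Longrightarrow> eqI d f (a * s) (s * b)"
proof -
  assume ss: "eqI d f (s * s) 1" and h: "eqI d f (s * a) (b * s)"
  have "eqI d f (s * (s * a) * s) (s * (b * s) * s)" by (intro eqI_mult h eqI_refl)
  then have 1: "eqI d f ((s * s) * (a * s)) ((s * b) * (s * s))" by (simp add: mult.assoc)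
  have "eqI d f ((s * s) * (a * s)) (1 * (a * s))" by (intro eqI_mult ss eqI_refl)
  then have "eqI d f (1 * (a * s)) ((s * s) * (a * s))" by (rule eqI_sym)
  then have 2: "eqI d f (a * s) ((s * s) * (a * s))" by simp
  have "eqI d f ((s * b) * (s * s)) ((s * b) * 1)" by (intro eqI_mult ss eqI_refl)
  then have 3: "eqI d f ((s * b) * (s * s)) (s * b)" by simp
  show ?thesis by (rule eqI_trans[OF eqI_trans[OF 2 1] 3])
qed

lemma EQ_flip: "eqI d f (s * s) 1 \<Longrightarrow> in_F d f 0 s \<Longrightarrow> EQ' k (s * a) (b * s) \<Longrightarrow> EQ' k (a * s) (s * b)"
proof -
  assume ss: "eqI d f (s * s) 1" and s0: "in_F d f 0 s" and h: "EQ' k (s * a) (b * s)"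
  have "EQ' (0 + k + 0) (s * (s * a) * s) (s * (b * s) * s)" by (intro EQ_rmult EQ_lmult h s0)
  then have 1: "EQ' k ((s * s) * (a * s)) ((s * b) * (s * s))" by (simp add: mult.assoc)
  have "eqI d f ((s * s) * (a * s)) (1 * (a * s))" by (intro eqI_mult ss eqI_refl)
  then have "eqI d f (1 * (a * s)) ((s * s) * (a * s))" by (rule eqI_sym)
  then have "eqI d f (a * s) ((s * s) * (a * s))" by simp
  then have 2: "EQ' k (a * s) ((s * s) * (a * s))" by (rule EQ_eqI)
  have "eqI d f ((s * b) * (s * s)) ((s * b) * 1)" by (intro eqI_mult ss eqI_refl)
  then have 3: "EQ' k ((s * b) * (s * s)) (s * b)" by (intro EQ_eqI) simp
  show ?thesis by (rule EQ_trans[OF EQ_trans[OF 2 1] 3])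
qed

lemma ss: "1 \<le> i \<Longrightarrow> i + 1 \<le> d \<Longrightarrow> eqI d f (sh i * sh i) 1"
  by (rule rel_ss) auto

lemma sx_base: "1 \<le> i \<Longrightarrow> i + 1 \<le> d \<Longrightarrow> a \<in> {1..d} \<Longrightarrow>
  EQ' 0 (sh i * xh a) (xh (simple_transp i a) * sh i)"
proof -
  assume i: "1 \<le> i" "i + 1 \<le> d" and a: "a \<in> {1..d}"
  have id1: "i \<le> d - 1" using i by simp
  have F0: "in_F d f 0 (- 1 - ch i * ch (i + 1) :: 'r FA)"
    by (intro F_diff F_uminus F_one F_mult0 F_c)
  have base: "EQ' 0 (sh i * xh i) (xh (i+1) * sh i)"
  proof -
    have "EQ' 0 (sh i * xh i) (xh (i+1) * sh i - 1 - ch i * ch (i+1))"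
      by (rule EQ_eqI[OF rel_sx1[OF i(1) id1]])
    moreover have "EQ' 0 (xh (i+1) * sh i - 1 - ch i * ch (i+1)) (xh (i+1) * sh i)"
      using F0 by (simp add: algebra_simps)
    ultimately show ?thesis by (rule EQ_trans)
  qed
  consider "a = i" | "a = i + 1" | "a \<noteq> i \<and> a \<noteq> i + 1" by blast
  then show ?thesis
  proof cases
    case 1 then show ?thesis using base by (simp add: simple_transp_def)
  next
    case 2
    have "EQ' 0 (xh i * sh i) (sh i * xh (i+1))"
      by (rule EQ_flip[OF ss[OF i] F_s base])
    then have "EQ' 0 (sh i * xh (i+1)) (xh i * sh i)" by (rule EQ_sym)
    then show ?thesis using 2 by (simp add: simple_transp_def)
  next
    case 3
    then have "eqI d f (sh i * xh a) (xh a * sh i)" by (intro rel_sx2[OF i(1) id1 a]) auto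
    then have "EQ' 0 (sh i * xh a) (xh a * sh i)" by (rule EQ_eqI)
    moreover have "simple_transp i a = a" using 3 by (simp add: simple_transp_def)
    ultimately show ?thesis by simp
  qed
qed

lemma sx_pow: "1 \<le> i \<Longrightarrow> i + 1 \<le> d \<Longrightarrow> a \<in> {1..d} \<Longrightarrow>
  EQ' (int n - 1) (sh i * xh a ^ n) (xh (simple_transp i a) ^ n * sh i)"
proof (induct n)
  case 0 then show ?case by simp
next
  case (Suc n)
  let ?a = "simple_transp i a"
  have "EQ' (int n - 1 + 1) (sh i * xh a ^ n * xh a) (xh ?a ^ n * sh i * xh a)"
    by (rule EQ_rmult[OF Suc(1)[OF Suc(2-4)] F_x])
  then have 1: "EQ' (int n) (sh i * xh a ^ Suc n) (xh ?a ^ n * (sh i * xh a))"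
    by (simp only: power_Suc2 mult.assoc mult_1_left mult_1_right diff_add_cancel add_0_right)
  have "EQ' (int n * 1 + 0) (xh ?a ^ n * (sh i * xh a)) (xh ?a ^ n * (xh ?a * sh i))"
    by (rule EQ_lmult[OF F_power[OF F_x] sx_base[OF Suc(2-4)]])
  then have 2: "EQ' (int n) (xh ?a ^ n * (sh i * xh a)) (xh ?a ^ Suc n * sh i)"
    by (simp only: power_Suc2 mult.assoc mult_1_left mult_1_right diff_add_cancel add_0_right)
  show ?case using EQ_trans[OF 1 2] by simp
qed

lemma sc_base: "1 \<le> i \<Longrightarrow> i + 1 \<le> d \<Longrightarrow> a \<in> {1..d} \<Longrightarrow>
  eqI d f (sh i * ch a) (ch (simple_transp i a) * sh i)"
proof -
  assume i: "1 \<le> i" "i + 1 \<le> d" and a: "a \<in> {1..d}"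
  have id1: "i \<le> d - 1" using i by simp
  consider "a = i" | "a = i + 1" | "a \<noteq> i \<and> a \<noteq> i + 1" by blast
  then show ?thesis
  proof cases
    case 1
    have "simple_transp i a = i + 1" using 1 by (simp add: simple_transp_def)
    then show ?thesis using 1 rel_sc1[OF i(1) id1] by simp
  next
    case 2
    have "eqI d f (ch i * sh i) (sh i * ch (i+1))"
      by (rule eqI_flip[OF ss[OF i] rel_sc1[OF i(1) id1]])
    then have "eqI d f (sh i * ch (i+1)) (ch i * sh i)" by (rule eqI_sym)
    moreover have "simple_transp i a = i" using 2 by (simp add: simple_transp_def)
    ultimately show ?thesis using 2 by simp
  next
    case 3
    then have "eqI d f (sh i * ch a) (ch a * sh i)" by (intro rel_sc2[OF i(1) id1 a]) auto
    moreover have "simple_transp i a = a" using 3 by (simp add: simple_transp_def)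
    ultimately show ?thesis by simp
  qed
qed

lemma conj_pow: "eqI d f (s * s) 1 \<Longrightarrow> eqI d f ((s * a * s) ^ n) (s * a ^ n * s)"
proof (induct n)
  case 0 then show ?case using eqI_sym[OF 0] by simp
next
  case (Suc n)
  have "eqI d f ((s * a * s) ^ n * (s * a * s)) (s * a ^ n * s * (s * a * s))"
    by (intro eqI_mult Suc(1)[OF Suc(2)] eqI_refl)
  then have 1: "eqI d f ((s * a * s) ^ Suc n) ((s * a ^ n) * (s * s) * (a * s))"
    by (simp only: power_Suc2 mult.assoc mult_1_left mult_1_right diff_add_cancel add_0_right)
  have "eqI d f ((s * a ^ n) * (s * s) * (a * s)) ((s * a ^ n) * 1 * (a * s))"
    by (intro eqI_mult Suc(2) eqI_refl)
  then have 2: "eqI d f ((s * a ^ n) * (s * s) * (a * s)) (s * a ^ Suc n * s)"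
    by (simp only: power_Suc2 mult.assoc mult_1_left mult_1_right diff_add_cancel add_0_right)
  show ?case by (rule eqI_trans[OF 1 2])
qed

lemma x_next: "1 \<le> i \<Longrightarrow> i + 1 \<le> d \<Longrightarrow>
  eqI d f (xh (i+1)) (sh i * xh i * sh i + (1 + ch i * ch (i+1)) * sh i)"
proof -
  assume i: "1 \<le> i" "i + 1 \<le> d"
  have id1: "i \<le> d - 1" using i by simp
  let ?u = "(1 + ch i * ch (i+1)) * sh i"
  have "eqI d f (sh i * xh i * sh i) ((xh (i+1) * sh i - 1 - ch i * ch (i+1)) * sh i)"
    by (intro eqI_mult rel_sx1[OF i(1) id1] eqI_refl)
  then have 1: "eqI d f (sh i * xh i * sh i) (xh (i+1) * (sh i * sh i) - ?u)"
    by (simp add: algebra_simps)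
  have "eqI d f (xh (i+1) * (sh i * sh i) - ?u) (xh (i+1) * 1 - ?u)"
    by (intro eqI_diff eqI_mult ss[OF i] eqI_refl)
  then have 2: "eqI d f (xh (i+1) * (sh i * sh i) - ?u) (xh (i+1) - ?u)" by simp
  have "eqI d f (sh i * xh i * sh i + ?u) (xh (i+1) - ?u + ?u)"
    by (rule eqI_add[OF eqI_trans[OF 1 2] eqI_refl])
  then have "eqI d f (sh i * xh i * sh i + ?u) (xh (i+1))" by simp
  then show ?thesis by (rule eqI_sym)
qed

end



definition Tsum :: "'a::ring_1 \<Rightarrow> 'a \<Rightarrow> nat \<Rightarrow> 'a" where
  "Tsum B v n = (\<Sum>a<n. B ^ a * v * B ^ (n - 1 - a))"

lemma Tsum_Suc: "Tsum B v (Suc n) = B ^ n * v + Tsum B v n * B"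
proof -
  have "(\<Sum>a<n. B ^ a * v * B ^ (Suc n - 1 - a)) = (\<Sum>a<n. B ^ a * v * B ^ (n - 1 - a) * B)"
  proof (rule sum.cong)
    fix a assume "a \<in> {..<n}"
    then have "Suc n - 1 - a = Suc (n - 1 - a)" by auto
    then show "B ^ a * v * B ^ (Suc n - 1 - a) = B ^ a * v * B ^ (n - 1 - a) * B"
      by (simp only: power_Suc2 mult.assoc)
  qed simp
  then show ?thesis unfolding Tsum_def by (simp add: sum_distrib_right)
qed

definition G :: "nat \<Rightarrow> nat \<Rightarrow> nat \<Rightarrow> 'r::comm_ring_1 FA \<Rightarrow> 'r FA" where
  "G l a b \<sigma> = (\<Sum>r<l. \<sigma> ^ (l - 1 - r) * (xh a ^ r * xh b ^ (l - 1 - r)))"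

definition Y2 :: "nat \<Rightarrow> nat \<Rightarrow> nat \<Rightarrow> nat \<Rightarrow> 'r::comm_ring_1 FA" where
  "Y2 d l a b = G l a b 1 * perm_hat d (cycle_of [a, b])
     + G l a b (-1) * perm_hat d (cycle_of [a, b]) * (ch a * ch b)"

lemma len2: "length (\<alpha>::'a list) = 2 \<Longrightarrow> \<exists>x y. \<alpha> = [x, y]"
  by (auto simp: numeral_2_eq_2 length_Suc_conv)

lemma alpha2: "{\<alpha>. length \<alpha> = 2 \<and> even (abs_alpha \<alpha>)} = {[False, False], [True, True]}"
proof (rule set_eqI)
  fix \<alpha> :: "bool list"
  show "\<alpha> \<in> {\<alpha>. length \<alpha> = 2 \<and> even (abs_alpha \<alpha>)} \<longleftrightarrow> \<alpha> \<in> {[False, False], [True, True]}"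
  proof (cases "length \<alpha> = 2")
    case True
    then obtain x y where xy: "\<alpha> = [x, y]" using len2 by blast
    show ?thesis unfolding xy by (cases x; cases y) (simp_all add: abs_alpha_def)
  next
    case False then show ?thesis by auto
  qed
qed

lemma rs2: assumes l: "1 \<le> (l::nat)"
  shows "{rs. length rs = 2 \<and> sum_list rs = l - 1} = (\<lambda>r. [r, l - 1 - r]) ` {..<l}"
proof (rule set_eqI)
  fix rs :: "nat list"
  show "rs \<in> {rs. length rs = 2 \<and> sum_list rs = l - 1} \<longleftrightarrow> rs \<in> (\<lambda>r. [r, l - 1 - r]) ` {..<l}"
  proof
    assume "rs \<in> {rs. length rs = 2 \<and> sum_list rs = l - 1}"
    then have h: "length rs = 2" "sum_list rs = l - 1" by auto
    then obtain x y where xy: "rs = [x, y]" using len2 by blast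
    then have "x + y = l - 1" using h by simp
    then have "x < l" "y = l - 1 - x" using l by auto
    then show "rs \<in> (\<lambda>r. [r, l - 1 - r]) ` {..<l}" unfolding xy by auto
  next
    assume "rs \<in> (\<lambda>r. [r, l - 1 - r]) ` {..<l}"
    then obtain r where "r < l" "rs = [r, l - 1 - r]" by auto
    then show "rs \<in> {rs. length rs = 2 \<and> sum_list rs = l - 1}" by auto
  qed
qed

lemma h_hat2: "1 \<le> l \<Longrightarrow> h_hat l \<alpha> 0 [a, b] =
  (\<Sum>r<l. (sc (eps_alpha \<alpha> 0) * xh a) ^ r * (sc (eps_alpha \<alpha> 1) * xh b) ^ (l - 1 - r))"
proof -
  assume l: "1 \<le> l"
  have inj: "inj_on (\<lambda>r. [r, l - 1 - r]) {..<l}" by (auto simp: inj_on_def)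
  have "h_hat l \<alpha> 0 [a, b] = (\<Sum>rs\<in>(\<lambda>r. [r, l - 1 - r]) ` {..<l}.
        lprod (map (\<lambda>k. (sc (eps_alpha \<alpha> k) * xh ([a, b] ! k)) ^ (rs ! k)) [0..<2]))"
  proof -
    have e: "{rs. length rs = length [a, b] \<and> sum_list rs = (length [a, b] - 1) * (l - 1) + 0}
       = {rs. length rs = 2 \<and> sum_list rs = l - 1}" by (simp add: numeral_2_eq_2)
    have e2: "[0..<length [a, b]] = [0..<2]" by (simp add: numeral_2_eq_2)
    show ?thesis unfolding h_hat_def e rs2[OF l] e2 ..
  qed
  also have "\<dots> = (\<Sum>r<l. lprod (map (\<lambda>k. (sc (eps_alpha \<alpha> k) * xh ([a, b] ! k)) ^ ([r, l - 1 - r] ! k)) [0..<2]))"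
    by (rule sum.reindex[OF inj, unfolded comp_def])
  also have "\<dots> = (\<Sum>r<l. (sc (eps_alpha \<alpha> 0) * xh a) ^ r * (sc (eps_alpha \<alpha> 1) * xh b) ^ (l - 1 - r))"
    by (simp add: numeral_2_eq_2 upt_rec)
  finally show ?thesis .
qed

lemma eps0: "eps_alpha \<alpha> 0 = 1" by (simp add: eps_alpha_def)
lemma epsFF: "eps_alpha [False, False] 1 = 1" by (simp add: eps_alpha_def)
lemma epsTT: "eps_alpha [True, True] 1 = -1" by (simp add: eps_alpha_def)

lemma G_pos: "G l a b 1 = (\<Sum>r<l. xh a ^ r * xh b ^ (l - 1 - r))"
  unfolding G_def power_one mult_1_left ..
lemma G_neg: "(\<Sum>r<l. (xh a :: 'r::comm_ring_1 FA) ^ r * (- xh b) ^ (l - 1 - r)) = G l a b (-1)"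
  unfolding G_def
proof (rule sum.cong)
  fix r
  show "xh a ^ r * (- xh b) ^ (l - 1 - r) = (-1) ^ (l - 1 - r) * (xh a ^ r * (xh b :: 'r FA) ^ (l - 1 - r))"
  proof -
    have "xh a ^ r * (- xh b) ^ (l - 1 - r) = xh a ^ r * ((-1) ^ (l - 1 - r) * (xh b :: 'r FA) ^ (l - 1 - r))"
      by (simp only: power_minus[of "xh b :: 'r FA"])
    also have "\<dots> = (xh a ^ r * (-1) ^ (l - 1 - r)) * (xh b :: 'r FA) ^ (l - 1 - r)"
      by (simp only: mult.assoc)
    also have "\<dots> = ((-1) ^ (l - 1 - r) * xh a ^ r) * (xh b :: 'r FA) ^ (l - 1 - r)"
      by (simp only: pm1_central)
    finally show ?thesis by (simp only: mult.assoc)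
  qed
qed simp

lemma A_r_hat2: "1 \<le> l \<Longrightarrow> A_r_hat d l [a, b] 0 = (Y2 d l a b :: 'r::comm_ring_1 FA)"
proof -
  assume l: "1 \<le> l"
  have tFF: "tau_alpha [False, False] = (1::'r)" by (simp add: tau_alpha_def abs_alpha_def)
  have tTT: "tau_alpha [True, True] = (1::'r)"
    by (simp add: tau_alpha_def abs_alpha_def numeral_2_eq_2 lessThan_Suc)
  have cFF: "c_alpha_hat [False, False] [a, b] = (1 :: 'r FA)"
    by (simp add: c_alpha_hat_def numeral_2_eq_2 upt_rec)
  have cTT: "c_alpha_hat [True, True] [a, b] = (ch a * ch b :: 'r FA)"
    by (simp add: c_alpha_hat_def numeral_2_eq_2 upt_rec)
  have hFF: "h_hat l [False, False] 0 [a, b] = (G l a b 1 :: 'r FA)"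
    unfolding h_hat2[OF l] eps0 epsFF G_pos by simp
  have hTT: "h_hat l [True, True] 0 [a, b] = (G l a b (-1) :: 'r FA)"
    unfolding h_hat2[OF l] eps0 epsTT G_neg[symmetric] by simp
  have al: "{\<alpha>. length \<alpha> = length [a, b] \<and> even (abs_alpha \<alpha>)} = {[False, False], [True, True]}"
    using alpha2 by (simp add: numeral_2_eq_2)
  show ?thesis
    unfolding A_r_hat_def al A_r_alpha_hat_def Y2_def
    by (simp add: tFF tTT cFF cTT hFF hTT)
qed

context fixes d :: nat and f :: "'r::comm_ring_1 poly"
begin

lemma F_Tsum: "in_F d f 1 B \<Longrightarrow> in_F d f 0 v \<Longrightarrow> in_F d f (int n - 1) (Tsum B v n)"
  unfolding Tsum_def
proof (rule F_sum)
  fix a assume B: "in_F d f 1 B" and v: "in_F d f 0 v" and a: "a \<in> {..<n}"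
  have "in_F d f (int a * 1 + 0 + int (n - 1 - a) * 1) (B ^ a * v * B ^ (n - 1 - a))"
    by (intro F_mult F_power B v)
  moreover have "int a * 1 + 0 + int (n - 1 - a) * 1 = int n - 1" using a by auto
  ultimately show "in_F d f (int n - 1) (B ^ a * v * B ^ (n - 1 - a))" by simp
qed

lemma expand: "in_F d f 1 B \<Longrightarrow> in_F d f 0 v \<Longrightarrow>
  in_F d f (int n - 2) ((B + v) ^ n - (B ^ n + Tsum B v n))"
proof (induct n)
  case 0 then show ?case by (simp add: Tsum_def)
next
  case (Suc n)
  have Bv: "in_F d f 1 (B + v)" by (rule F_add[OF Suc(2) F_mono[OF Suc(3)]]) simp
  have "in_F d f (int n - 2 + 1) (((B + v) ^ n - (B ^ n + Tsum B v n)) * (B + v))"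
    by (rule F_mult[OF Suc(1)[OF Suc(2,3)] Bv])
  moreover have "in_F d f (int n - 1 + 0) (Tsum B v n * v)"
    by (rule F_mult[OF F_Tsum[OF Suc(2,3)] Suc(3)])
  ultimately have "in_F d f (int n - 1)
     (((B + v) ^ n - (B ^ n + Tsum B v n)) * (B + v) + Tsum B v n * v)"
    by (intro F_add) auto
  moreover have "((B + v) ^ n - (B ^ n + Tsum B v n)) * (B + v) + Tsum B v n * v
      = (B + v) ^ Suc n - (B ^ Suc n + Tsum B v (Suc n))"
  proof -
    have ab: "(P - (Q + T)) * (B + v) + T * v = P * (B + v) - (Q * B + (Q * v + T * B))"
      for P Q T :: "'r FA" by (simp add: algebra_simps)
    show ?thesis unfolding ab Tsum_Suc power_Suc2 by (simp add: algebra_simps)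
  qed
  ultimately show ?case by simp
qed

lemma cc_x: "1 \<le> i \<Longrightarrow> i + 1 \<le> d \<Longrightarrow>
  eqI d f (ch i * ch (i+1) * xh i ^ n) ((-1) ^ n * (xh i ^ n * (ch i * ch (i+1))))"
proof (induct n)
  case 0 then show ?case by simp
next
  case (Suc n)
  have iI: "i \<in> {1..d}" "i + 1 \<in> {1..d}" "i \<noteq> i + 1" using Suc by auto
  have x1: "eqI d f (ch (i+1) * xh i) (xh i * ch (i+1))"
    by (rule eqI_sym[OF rel_xc2[OF iI]])
  have x2: "eqI d f (ch i * xh i) (- (xh i * ch i))"
  proof -
    have "eqI d f (- (xh i * ch i)) (- (- (ch i * xh i)))" by (rule eqI_uminus[OF rel_xc1[OF iI(1)]])
    then have "eqI d f (- (xh i * ch i)) (ch i * xh i)" by simp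
    then show ?thesis by (rule eqI_sym)
  qed
  have base: "eqI d f (ch i * ch (i+1) * xh i) (- (xh i * (ch i * ch (i+1))))"
  proof -
    have 1: "eqI d f (ch i * (ch (i+1) * xh i)) (ch i * (xh i * ch (i+1)))" by (intro eqI_mult eqI_refl x1)
    have 2: "eqI d f ((ch i * xh i) * ch (i+1)) ((- (xh i * ch i)) * ch (i+1))" by (intro eqI_mult eqI_refl x2)
    have eq: "ch i * (xh i * ch (i+1)) = (ch i * xh i) * ch (i+1)" by (simp only: mult.assoc)
    have "eqI d f (ch i * (ch (i+1) * xh i)) ((- (xh i * ch i)) * ch (i+1))"
      by (rule eqI_trans[OF 1[unfolded eq] 2])
    then show ?thesis by (simp only: mult.assoc mult_minus_left)
  qed
  have 1: "eqI d f (ch i * ch (i+1) * xh i ^ n * xh i) ((-1) ^ n * (xh i ^ n * (ch i * ch (i+1))) * xh i)"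
    by (intro eqI_mult Suc(1)[OF Suc(2,3)] eqI_refl)
  have 2: "eqI d f (((-1) ^ n * xh i ^ n) * (ch i * ch (i+1) * xh i)) (((-1) ^ n * xh i ^ n) * (- (xh i * (ch i * ch (i+1)))))"
    by (intro eqI_mult eqI_refl base)
  have e: "(-1) ^ n * (xh i ^ n * (ch i * ch (i+1))) * xh i = ((-1) ^ n * xh i ^ n) * (ch i * ch (i+1) * xh i)"
    by (simp only: mult.assoc)
  have E: "eqI d f (ch i * ch (i+1) * xh i ^ n * xh i) (((-1) ^ n * xh i ^ n) * (- (xh i * (ch i * ch (i+1)))))"
    by (rule eqI_trans[OF 1[unfolded e] 2])
  have e1: "ch i * ch (i+1) * xh i ^ n * xh i = ch i * ch (i+1) * xh i ^ Suc n"
    by (simp only: power_Suc2 mult.assoc)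
  have e2: "((-1) ^ n * xh i ^ n) * (- (xh i * (ch i * ch (i+1)))) = (-1) ^ Suc n * (xh i ^ Suc n * (ch i * ch (i+1 :: nat)) :: 'r FA)"
  proof -
    have g: "(s' * X) * (- (x * C)) = (- s') * ((X * x) * C)" for s' X x C :: "'r FA"
      by (simp add: mult.assoc)
    show ?thesis unfolding g power_Suc2[of "xh i" n, symmetric] by simp
  qed
  show ?case using E unfolding e1 e2 .
qed

lemma sx_prod: "1 \<le> i \<Longrightarrow> i + 1 \<le> d \<Longrightarrow> a \<in> {1..d} \<Longrightarrow> b \<in> {1..d} \<Longrightarrow>
  in_F d f (int r + int t - 1) (sh i * (xh a ^ r * xh b ^ t)
     - (xh (simple_transp i a) ^ r * xh (simple_transp i b) ^ t) * sh i)"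
proof -
  assume h: "1 \<le> i" "i + 1 \<le> d" "a \<in> {1..d}" "b \<in> {1..d}"
  let ?a = "simple_transp i a" and ?b = "simple_transp i b"
  have "in_F d f (int r - 1 + int t * 1) ((sh i * xh a ^ r) * xh b ^ t - (xh ?a ^ r * sh i) * xh b ^ t)"
    by (rule EQ_rmult[OF sx_pow[OF h(1,2,3)] F_power[OF F_x]])
  then have 1: "in_F d f (int r + int t - 1) (sh i * (xh a ^ r * xh b ^ t) - xh ?a ^ r * (sh i * xh b ^ t))"
    by (simp add: mult.assoc algebra_simps)
  have "in_F d f (int r * 1 + (int t - 1)) (xh ?a ^ r * (sh i * xh b ^ t) - xh ?a ^ r * (xh ?b ^ t * sh i))"
    by (rule EQ_lmult[OF F_power[OF F_x] sx_pow[OF h(1,2,4)]])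
  then have 2: "in_F d f (int r + int t - 1) (xh ?a ^ r * (sh i * xh b ^ t) - (xh ?a ^ r * xh ?b ^ t) * sh i)"
    by (simp add: mult.assoc algebra_simps)
  show ?thesis by (rule EQ_trans[OF 1 2])
qed

end



lemma cycle2: "a \<noteq> b \<Longrightarrow> cycle_of [a, b] = id(a := b, b := a)"
proof (rule ext)
  fix x assume ab: "a \<noteq> b"
  have t1: "(THE k. k < Suc (Suc 0) \<and> [a, b] ! k = a) = 0"
    by (rule the_equality) (use ab in \<open>auto simp: less_Suc_eq\<close>)
  have t2: "(THE k. k < Suc (Suc 0) \<and> [a, b] ! k = b) = 1"
    by (rule the_equality) (use ab in \<open>auto simp: less_Suc_eq\<close>)
  show "cycle_of [a, b] x = (id(a := b, b := a)) x"
    using ab t1 t2 by (auto simp: cycle_of_def)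
qed

primrec tw :: "nat \<Rightarrow> nat \<Rightarrow> nat list" where
  "tw j 0 = []"
| "tw j (Suc i) = (if i = j then [j] else i # tw j i @ [i])"

lemma tw_props: "j < i \<Longrightarrow> perm_of_word (tw j i) = id(i := j, j := i) \<and> set (tw j i) \<subseteq> {j..<i}"
proof (induct i)
  case 0 then show ?case by simp
next
  case (Suc i)
  show ?case
  proof (cases "i = j")
    case True
    then show ?thesis by (auto simp: perm_of_word_Cons simple_transp_def fun_eq_iff)
  next
    case False
    then have ji: "j < i" using Suc by simp
    have IH: "perm_of_word (tw j i) = id(i := j, j := i)" "set (tw j i) \<subseteq> {j..<i}" using Suc(1)[OF ji] by auto
    have "perm_of_word (tw j (Suc i)) = simple_transp i \<circ> id(i := j, j := i) \<circ> simple_transp i"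
      using False IH by (simp add: perm_of_word_Cons perm_of_word_append o_assoc)
    also have "\<dots> = id(Suc i := j, j := Suc i)"
      using ji by (auto simp: simple_transp_def fun_eq_iff)
    finally show ?thesis using False IH ji by auto
  qed
qed

context fixes d :: nat and f :: "'r::comm_ring_1 poly"
begin

lemma perm_hat_eq: "set ws \<subseteq> {1..<d} \<Longrightarrow> eqI d f (perm_hat d (perm_of_word ws)) (sw ws)"
proof -
  assume ws: "set ws \<subseteq> {1..<d}"
  let ?P = "\<lambda>w. set w \<subseteq> {1..<d} \<and> perm_of_word w = perm_of_word ws"
  have "?P (SOME w. ?P w)" by (rule someI[of ?P ws]) (use ws in simp)
  then have "WE d f (SOME w. ?P w) ws" using coxeter_aux[of d d _ ws] ws by auto
  then show ?thesis unfolding perm_hat_def WE_def sw_def by auto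
qed

lemma P_tw: "1 \<le> j \<Longrightarrow> j < i \<Longrightarrow> i \<le> d \<Longrightarrow> eqI d f (perm_hat d (cycle_of [i, j])) (sw (tw j i))"
proof -
  assume h: "1 \<le> j" "j < i" "i \<le> d"
  have tp: "perm_of_word (tw j i) = id(i := j, j := i)" "set (tw j i) \<subseteq> {j..<i}" using tw_props[OF h(2)] by auto
  have "cycle_of [i, j] = perm_of_word (tw j i)" using tp h by (simp add: cycle2)
  moreover have "set (tw j i) \<subseteq> {1..<d}" using tp(2) h by auto
  ultimately show ?thesis using perm_hat_eq by simp
qed

lemma P_conj: "1 \<le> j \<Longrightarrow> j < i \<Longrightarrow> i + 1 \<le> d \<Longrightarrow>
  eqI d f (sh i * perm_hat d (cycle_of [i, j]) * sh i) (perm_hat d (cycle_of [i + 1, j]))"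
proof -
  assume h: "1 \<le> j" "j < i" "i + 1 \<le> d"
  have 1: "eqI d f (sh i * perm_hat d (cycle_of [i, j]) * sh i) (sh i * sw (tw j i) * sh i)"
    by (intro eqI_mult eqI_refl P_tw) (use h in auto)
  have ij: "i \<noteq> j" using h by simp
  have e: "sh i * sw (tw j i) * sh i = sw (tw j (Suc i))" using ij by (simp add: sw_def mult.assoc)
  have 2: "eqI d f (perm_hat d (cycle_of [Suc i, j])) (sw (tw j (Suc i)))"
    by (rule P_tw) (use h in auto)
  show ?thesis using eqI_trans[OF 1[unfolded e] eqI_sym[OF 2]] by simp
qed

lemma P_adj: "1 \<le> i \<Longrightarrow> i + 1 \<le> d \<Longrightarrow> eqI d f (perm_hat d (cycle_of [i + 1, i])) (sh i)"
proof -
  assume h: "1 \<le> i" "i + 1 \<le> d"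
  have "eqI d f (perm_hat d (cycle_of [Suc i, i])) (sw (tw i (Suc i)))" by (rule P_tw) (use h in auto)
  then show ?thesis by (simp add: sw_def)
qed

lemma sigma_central: "\<sigma> = 1 \<or> \<sigma> = -1 \<Longrightarrow> \<sigma> ^ k * a = a * (\<sigma> ^ k :: 'r FA)"
  using pm1_central by auto
lemma F_sigma: "\<sigma> = 1 \<or> \<sigma> = -1 \<Longrightarrow> in_F d f 0 (\<sigma> :: 'r FA)"
proof -
  assume s: "\<sigma> = 1 \<or> \<sigma> = -1"
  have "in_F d f 0 (sc 1 :: 'r FA)" "in_F d f 0 (sc (-1) :: 'r FA)" by (rule F_sc)+
  then show ?thesis using s by auto
qed

lemma F_G: "\<sigma> = 1 \<or> \<sigma> = -1 \<Longrightarrow> in_F d f (int l - 1) (G l a b \<sigma>)"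
  unfolding G_def
proof (rule F_sum)
  fix r assume s: "\<sigma> = 1 \<or> \<sigma> = -1" and r: "r \<in> {..<l}"
  have "in_F d f (int (l - 1 - r) * 0 + (int r * 1 + int (l - 1 - r) * 1)) (\<sigma> ^ (l - 1 - r) * (xh a ^ r * xh b ^ (l - 1 - r)))"
    by (intro F_mult F_power F_x F_sigma[OF s])
  moreover have "int (l - 1 - r) * 0 + (int r * 1 + int (l - 1 - r) * 1) = int l - 1" using r by auto
  ultimately show "in_F d f (int l - 1) (\<sigma> ^ (l - 1 - r) * (xh a ^ r * xh b ^ (l - 1 - r)))" by simp
qed

lemma F_Y2: "in_F d f (int l - 1) (Y2 d l a b)"
proof -
  have "in_F d f (int l - 1 + 0) (G l a b 1 * perm_hat d (cycle_of [a, b]))"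
    by (intro F_mult F_G F_perm_hat) simp
  moreover have "in_F d f (int l - 1 + 0 + 0) (G l a b (-1) * perm_hat d (cycle_of [a, b]) * (ch a * ch b))"
    by (intro F_mult F_G F_perm_hat F_c F_mult0) simp
  ultimately show ?thesis unfolding Y2_def by (intro F_add) auto
qed

lemma conj_G: "1 \<le> i \<Longrightarrow> i + 1 \<le> d \<Longrightarrow> a \<in> {1..d} \<Longrightarrow> b \<in> {1..d} \<Longrightarrow> \<sigma> = 1 \<or> \<sigma> = -1 \<Longrightarrow>
  in_F d f (int l - 2) (sh i * G l a b \<sigma> - G l (simple_transp i a) (simple_transp i b) \<sigma> * sh i)"
proof -
  assume h: "1 \<le> i" "i + 1 \<le> d" "a \<in> {1..d}" "b \<in> {1..d}" and s: "\<sigma> = 1 \<or> \<sigma> = -1"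
  let ?a = "simple_transp i a" and ?b = "simple_transp i b"
  have "in_F d f (int l - 2) (\<Sum>r<l. sh i * (\<sigma> ^ (l - 1 - r) * (xh a ^ r * xh b ^ (l - 1 - r)))
      - \<sigma> ^ (l - 1 - r) * (xh ?a ^ r * xh ?b ^ (l - 1 - r)) * sh i)"
  proof (rule F_sum)
    fix r assume r: "r \<in> {..<l}"
    have "in_F d f (int (l - 1 - r) * 0 + (int r + int (l - 1 - r) - 1))
       (\<sigma> ^ (l - 1 - r) * (sh i * (xh a ^ r * xh b ^ (l - 1 - r))) - \<sigma> ^ (l - 1 - r) * ((xh ?a ^ r * xh ?b ^ (l - 1 - r)) * sh i))"
      by (rule EQ_lmult[OF F_power[OF F_sigma[OF s]] sx_prod[OF h]])
    moreover have "int (l - 1 - r) * 0 + (int r + int (l - 1 - r) - 1) = int l - 2" using r by auto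
    moreover have "sh i * (\<sigma> ^ (l - 1 - r) * X) = \<sigma> ^ (l - 1 - r) * (sh i * X)" for X
    proof -
      have sc': "sh i * \<sigma> ^ (l - 1 - r) = \<sigma> ^ (l - 1 - r) * sh i" using sigma_central[OF s] by metis
      show ?thesis by (simp only: mult.assoc[symmetric] sc')
    qed
    ultimately show "in_F d f (int l - 2) (sh i * (\<sigma> ^ (l - 1 - r) * (xh a ^ r * xh b ^ (l - 1 - r)))
      - \<sigma> ^ (l - 1 - r) * (xh ?a ^ r * xh ?b ^ (l - 1 - r)) * sh i)" by (simp add: mult.assoc)
  qed
  then show ?thesis unfolding G_def by (simp add: sum_subtractf sum_distrib_left sum_distrib_right)
qed

end



lemma Tsum_neg: "Tsum B (- v) n = - Tsum B v n"
  by (simp add: Tsum_def sum_negf)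

context fixes d :: nat and f :: "'r::comm_ring_1 poly"
begin

lemma st_i: "simple_transp i i = i + 1" by (simp add: simple_transp_def)
lemma st_i1: "simple_transp i (i + 1) = i" by (simp add: simple_transp_def)
lemma st_j: "j < i \<Longrightarrow> simple_transp i j = j" by (simp add: simple_transp_def)

lemma sCs: "1 \<le> j \<Longrightarrow> j < i \<Longrightarrow> i + 1 \<le> d \<Longrightarrow>
  eqI d f (sh i * (ch i * ch j) * sh i) (ch (i + 1) * ch j)"
proof -
  assume h: "1 \<le> j" "j < i" "i + 1 \<le> d"
  have i1: "1 \<le> i" using h by simp
  have a: "eqI d f (sh i * ch i) (ch (i + 1) * sh i)"
    using sc_base[OF i1 h(3), of i] h by (simp add: st_i)
  have b: "eqI d f (sh i * ch j) (ch j * sh i)"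
    using sc_base[OF i1 h(3), of j] h by (simp add: st_j)
  have 1: "eqI d f ((sh i * ch i) * (ch j * sh i)) ((ch (i + 1) * sh i) * (ch j * sh i))"
    by (intro eqI_mult a eqI_refl)
  have 2: "eqI d f (ch (i + 1) * (sh i * ch j) * sh i) (ch (i + 1) * (ch j * sh i) * sh i)"
    by (intro eqI_mult b eqI_refl)
  have 3: "eqI d f ((ch (i + 1) * ch j) * (sh i * sh i)) ((ch (i + 1) * ch j) * 1)"
    by (intro eqI_mult ss[OF i1 h(3)] eqI_refl)
  have e1: "sh i * (ch i * ch j) * sh i = (sh i * ch i) * (ch j * sh i)" by (simp only: mult.assoc)
  have e2: "(ch (i + 1) * sh i) * (ch j * sh i) = ch (i + 1) * (sh i * ch j) * sh i" by (simp only: mult.assoc)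
  have e3: "ch (i + 1) * (ch j * sh i) * sh i = (ch (i + 1) * ch j) * (sh i * sh i)" by (simp only: mult.assoc)
  show ?thesis using eqI_trans[OF eqI_trans[OF 1[unfolded e2] 2[unfolded e3]] 3] unfolding e1 by simp
qed

lemma conj_Y2: "1 \<le> j \<Longrightarrow> j < i \<Longrightarrow> i + 1 \<le> d \<Longrightarrow>
  in_F d f (int l - 2) (sh i * Y2 d l i j * sh i - Y2 d l (i + 1) j)"
proof -
  assume h: "1 \<le> j" "j < i" "i + 1 \<le> d"
  have i1: "1 \<le> i" using h by simp
  let ?s = "sh i :: 'r FA" and ?P = "perm_hat d (cycle_of [i, j]) :: 'r FA"
    and ?P' = "perm_hat d (cycle_of [i + 1, j]) :: 'r FA"
  let ?C = "ch i * ch j :: 'r FA" and ?C' = "ch (i + 1) * ch j :: 'r FA"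
  have ad: "i \<in> {1..d}" "j \<in> {1..d}" using h by auto
  have cg: "in_F d f (int l - 2) (?s * G l i j \<sigma> - G l (i + 1) j \<sigma> * ?s)" if s: "\<sigma> = 1 \<or> \<sigma> = -1" for \<sigma>
    using conj_G[OF i1 h(3) ad s] h by (simp add: st_i st_j)
  have sPs: "eqI d f (?s * ?P * ?s) ?P'" by (rule P_conj[OF h])
  have sCs': "eqI d f (?s * ?C * ?s) ?C'" by (rule sCs[OF h])
  have p1a: "in_F d f (int l - 2 + 0) ((?s * G l i j 1) * (?P * ?s) - (G l (i + 1) j 1 * ?s) * (?P * ?s))"
    by (rule EQ_rmult[OF cg F_mult0[OF F_perm_hat F_s]]) simp
  have p1b: "eqI d f (G l (i + 1) j 1 * (?s * ?P * ?s)) (G l (i + 1) j 1 * ?P')"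
    by (intro eqI_mult eqI_refl sPs)
  have p1: "in_F d f (int l - 2) (?s * (G l i j 1 * ?P) * ?s - G l (i + 1) j 1 * ?P')"
  proof -
    have "in_F d f (int l - 2) ((?s * G l i j 1) * (?P * ?s) - G l (i + 1) j 1 * (?s * ?P * ?s))"
      using p1a by (simp add: mult.assoc)
    from EQ_trans[OF this EQ_eqI[OF p1b]] show ?thesis by (simp add: mult.assoc)
  qed
  have p2a: "in_F d f (int l - 2 + 0) ((?s * G l i j (-1)) * (?P * ?C * ?s) - (G l (i + 1) j (-1) * ?s) * (?P * ?C * ?s))"
    by (rule EQ_rmult[OF cg F_mult0[OF F_mult0[OF F_perm_hat F_mult0[OF F_c F_c]] F_s]]) simp
  have q1: "eqI d f (?s * ?P * (?s * ?s) * ?C * ?s) (?s * ?P * 1 * ?C * ?s)"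
    by (intro eqI_mult eqI_refl ss[OF i1 h(3)])
  have q2: "eqI d f ((?s * ?P * ?s) * (?s * ?C * ?s)) (?P' * ?C')"
    by (intro eqI_mult sPs sCs')
  have q: "eqI d f (?s * (?P * ?C * ?s)) (?P' * ?C')"
  proof -
    have e: "?s * ?P * (?s * ?s) * ?C * ?s = (?s * ?P * ?s) * (?s * ?C * ?s)" by (simp only: mult.assoc)
    have "eqI d f (?s * ?P * 1 * ?C * ?s) (?P' * ?C')" by (rule eqI_trans[OF eqI_sym[OF q1] q2[folded e]])
    then show ?thesis by (simp add: mult.assoc)
  qed
  have p2b: "eqI d f (G l (i + 1) j (-1) * (?s * (?P * ?C * ?s))) (G l (i + 1) j (-1) * (?P' * ?C'))"
    by (intro eqI_mult eqI_refl q)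
  have p2: "in_F d f (int l - 2) (?s * (G l i j (-1) * ?P * ?C) * ?s - G l (i + 1) j (-1) * ?P' * ?C')"
  proof -
    have "in_F d f (int l - 2) ((?s * G l i j (-1)) * (?P * ?C * ?s) - G l (i + 1) j (-1) * (?s * (?P * ?C * ?s)))"
      using p2a by (simp add: mult.assoc)
    from EQ_trans[OF this EQ_eqI[OF p2b]] show ?thesis by (simp add: mult.assoc)
  qed
  from F_add[OF p1 p2] show ?thesis unfolding Y2_def by (simp add: algebra_simps)
qed

end



context fixes d :: nat and f :: "'r::comm_ring_1 poly"
begin

lemma T_term: "1 \<le> i \<Longrightarrow> i + 1 \<le> d \<Longrightarrow> a < l \<Longrightarrow>
  in_F d f (int l - 2) (xh (i + 1) ^ a * ((1 + ch i * ch (i + 1)) * sh i) * xh (i + 1) ^ (l - 1 - a)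
    - (xh (i + 1) ^ a * xh i ^ (l - 1 - a) * sh i
       + (-1) ^ (l - 1 - a) * (xh (i + 1) ^ a * xh i ^ (l - 1 - a)) * sh i * (ch (i + 1) * ch i)))"
proof -
  assume h: "1 \<le> i" "i + 1 \<le> d" "a < l"
  define b where "b = l - 1 - a"
  let ?x = "xh (i + 1) :: 'r FA" and ?y = "xh i :: 'r FA" and ?s = "sh i :: 'r FA"
  let ?cc = "ch i * ch (i + 1) :: 'r FA" and ?C' = "ch (i + 1) * ch i :: 'r FA"
  have F1c: "in_F d f 0 (1 + ?cc)" by (intro F_add F_one F_mult0 F_c)
  have iI: "i \<in> {1..d}" "i + 1 \<in> {1..d}" using h by auto
  have sx0: "in_F d f (int b - 1) (?s * ?x ^ b - xh (simple_transp i (i + 1)) ^ b * ?s)"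
    by (rule sx_pow[OF h(1,2) iI(2)])
  have sx: "in_F d f (int b - 1) (?s * ?x ^ b - ?y ^ b * ?s)" using sx0 unfolding st_i1 .
  have A: "in_F d f (int a * 1 + (0 + (int b - 1)))
      (?x ^ a * ((1 + ?cc) * (?s * ?x ^ b)) - ?x ^ a * ((1 + ?cc) * (?y ^ b * ?s)))"
    by (rule EQ_lmult[OF F_power[OF F_x] EQ_lmult[OF F1c sx]])
  have ab: "int a * 1 + (0 + (int b - 1)) = int l - 2" using h unfolding b_def by auto
  have ccs: "eqI d f (?cc * ?s) (?s * ?C')"
  proof -
    have s1: "eqI d f (?s * ch i) (ch (i + 1) * ?s)" using sc_base[OF h(1,2) iI(1)] unfolding st_i .
    have s2: "eqI d f (?s * ch (i + 1)) (ch i * ?s)" using sc_base[OF h(1,2) iI(2)] unfolding st_i1 .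
    have 1: "eqI d f (ch i * (ch (i + 1) * ?s)) (ch i * (?s * ch i))" by (intro eqI_mult eqI_refl eqI_sym[OF s1])
    have 2: "eqI d f ((ch i * ?s) * ch i) ((?s * ch (i + 1)) * ch i)" by (intro eqI_mult eqI_refl eqI_sym[OF s2])
    have e: "ch i * (?s * ch i) = (ch i * ?s) * ch i" by (simp only: mult.assoc)
    show ?thesis using eqI_trans[OF 1[unfolded e] 2] by (simp add: mult.assoc)
  qed
  have cx: "eqI d f (?cc * ?y ^ b) ((-1) ^ b * (?y ^ b * ?cc))" by (rule cc_x[OF h(1,2)])
  have B1: "eqI d f (?cc * ?y ^ b * ?s) ((-1) ^ b * (?y ^ b * (ch i * (ch (i + 1) * ?s))))"
    using eqI_mult[OF cx eqI_refl[of d f ?s]] by (simp add: mult.assoc)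
  have B2: "eqI d f ((-1) ^ b * ?y ^ b * (?cc * ?s)) ((-1) ^ b * ?y ^ b * (?s * ?C'))"
    by (intro eqI_mult eqI_refl ccs)
  have B: "eqI d f ((1 + ?cc) * (?y ^ b * ?s)) (?y ^ b * ?s + (-1) ^ b * ?y ^ b * (?s * ?C'))"
  proof -
    have "eqI d f (?cc * ?y ^ b * ?s) ((-1) ^ b * ?y ^ b * (?s * ?C'))"
      using eqI_trans[OF B1 B2[unfolded mult.assoc]] by (simp add: mult.assoc)
    then have "eqI d f (?y ^ b * ?s + ?cc * ?y ^ b * ?s) (?y ^ b * ?s + (-1) ^ b * ?y ^ b * (?s * ?C'))"
      by (intro eqI_add eqI_refl)
    then show ?thesis by (simp add: algebra_simps)
  qed
  have B': "eqI d f (?x ^ a * ((1 + ?cc) * (?y ^ b * ?s))) (?x ^ a * (?y ^ b * ?s + (-1) ^ b * ?y ^ b * (?s * ?C')))"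
    by (intro eqI_mult eqI_refl B)
  have fin: "?x ^ a * (?y ^ b * ?s + (-1) ^ b * ?y ^ b * (?s * ?C'))
     = ?x ^ a * ?y ^ b * ?s + (-1) ^ b * (?x ^ a * ?y ^ b) * ?s * ?C'"
  proof -
    have "?x ^ a * (-1) ^ b = (-1) ^ b * ?x ^ a" by (rule pm1_central[symmetric])
    then have "?x ^ a * ((-1) ^ b * ?y ^ b * (?s * ?C')) = (-1) ^ b * (?x ^ a * ?y ^ b) * ?s * ?C'"
      by (simp only: mult.assoc[symmetric])
    then show ?thesis by (simp add: distrib_left mult.assoc)
  qed
  have "in_F d f (int l - 2) (?x ^ a * ((1 + ?cc) * (?s * ?x ^ b)) - ?x ^ a * ((1 + ?cc) * (?y ^ b * ?s)))"
    using A unfolding ab .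
  from EQ_trans[OF this EQ_eqI[OF B']] show ?thesis unfolding fin b_def[symmetric] by (simp add: mult.assoc)
qed

lemma T_lemma: "1 \<le> i \<Longrightarrow> i + 1 \<le> d \<Longrightarrow> 1 \<le> l \<Longrightarrow>
  in_F d f (int l - 2) (Tsum (xh (i + 1)) ((1 + ch i * ch (i + 1)) * sh i) l - Y2 d l (i + 1) i)"
proof -
  assume h: "1 \<le> i" "i + 1 \<le> d" "1 \<le> l"
  let ?x = "xh (i + 1) :: 'r FA" and ?y = "xh i :: 'r FA" and ?s = "sh i :: 'r FA"
  let ?C' = "ch (i + 1) * ch i :: 'r FA"
  let ?P = "perm_hat d (cycle_of [i + 1, i]) :: 'r FA"
  have S: "in_F d f (int l - 2) (Tsum ?x ((1 + ch i * ch (i + 1)) * ?s) l -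
     (\<Sum>a<l. ?x ^ a * ?y ^ (l - 1 - a) * ?s + (-1) ^ (l - 1 - a) * (?x ^ a * ?y ^ (l - 1 - a)) * ?s * ?C'))"
    unfolding Tsum_def sum_subtractf[symmetric] by (rule F_sum) (use T_term[OF h(1,2)] in auto)
  have e: "(\<Sum>a<l. ?x ^ a * ?y ^ (l - 1 - a) * ?s + (-1) ^ (l - 1 - a) * (?x ^ a * ?y ^ (l - 1 - a)) * ?s * ?C')
     = G l (i + 1) i 1 * ?s + G l (i + 1) i (-1) * ?s * ?C'"
    unfolding G_def by (simp add: sum.distrib sum_distrib_right)
  have P: "eqI d f ?P ?s" by (rule P_adj[OF h(1,2)])
  have "eqI d f (G l (i + 1) i 1 * ?s + G l (i + 1) i (-1) * ?s * ?C') (Y2 d l (i + 1) i)"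
    unfolding Y2_def by (intro eqI_add eqI_mult eqI_refl eqI_sym[OF P])
  from EQ_trans[OF S[unfolded e] EQ_eqI[OF this]] show ?thesis .
qed

lemma base_x1: "1 \<le> l \<Longrightarrow> degree f = l \<Longrightarrow> lead_coeff f = 1 \<Longrightarrow>
  (\<And>k. coeff f k \<noteq> 0 \<Longrightarrow> even (l + k)) \<Longrightarrow> in_F d f (int l - 2) ((xh 1 :: 'r FA) ^ l)"
proof -
  assume h: "1 \<le> l" "degree f = l" "lead_coeff f = 1" and par: "\<And>k. coeff f k \<noteq> 0 \<Longrightarrow> even (l + k)"
  let ?S = "(\<Sum>k<l. sc (coeff f k) * (xh 1 :: 'r FA) ^ k)"
  have "(\<Sum>k\<le>degree f. sc (coeff f k) * (xh 1 :: 'r FA) ^ k) = ?S + xh 1 ^ l"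
    using h by (simp add: lessThan_Suc_atMost[symmetric])
  then have r: "eqI d f (?S + xh 1 ^ l) 0" using rel_f[of d f] by simp
  have FS: "in_F d f (int l - 2) ?S"
  proof (rule F_sum)
    fix k assume k: "k \<in> {..<l}"
    show "in_F d f (int l - 2) (sc (coeff f k) * xh 1 ^ k)"
    proof (cases "coeff f k = 0")
      case True then show ?thesis by simp
    next
      case False
      then have "even (l + k)" by (rule par)
      then have kl: "int k \<le> int l - 2" using k by (cases "k + 1 = l") auto
      have "in_F d f (0 + int k * 1) (sc (coeff f k) * (xh 1 :: 'r FA) ^ k)"
        by (intro F_mult F_sc F_power F_x)
      then have "in_F d f (int k) (sc (coeff f k) * (xh 1 :: 'r FA) ^ k)" by simp
      then show ?thesis by (rule F_mono[OF _ kl])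
    qed
  qed
  have "in_F d f (int l - 2) (?S + xh 1 ^ l)" using r unfolding eqI_def by (simp add: F_ideal)
  from F_diff[OF this FS] show ?thesis by simp
qed

definition ysum :: "nat \<Rightarrow> nat \<Rightarrow> nat \<Rightarrow> 'r FA" where
  "ysum d' l n = (\<Sum>j\<in>{1..<n}. Y2 d' l n j)"

lemma main_ind: "1 \<le> l \<Longrightarrow> degree f = l \<Longrightarrow> lead_coeff f = 1 \<Longrightarrow>
  (\<And>k. coeff f k \<noteq> 0 \<Longrightarrow> even (l + k)) \<Longrightarrow> 1 \<le> n \<Longrightarrow> n \<le> d \<Longrightarrow>
  in_F d f (int l - 2) (xh n ^ l - ysum d l n)"
proof (induct n)
  case 0 then show ?case by simp
next
  case (Suc n)
  note hyps = Suc(2-5)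
  show ?case
  proof (cases "n = 0")
    case True
    then show ?thesis using base_x1[OF hyps] by (simp add: ysum_def)
  next
    case False
    then have n1: "1 \<le> n" and nd: "n + 1 \<le> d" using Suc by auto
    have IH: "in_F d f (int l - 2) (xh n ^ l - ysum d l n)" using Suc(1)[OF hyps n1] nd by simp
    let ?x = "xh (n + 1) :: 'r FA" and ?y = "xh n :: 'r FA" and ?s = "sh n :: 'r FA"
    let ?u = "(1 + ch n * ch (n + 1)) * sh n :: 'r FA"
    have F0u: "in_F d f 0 ?u" by (intro F_mult0 F_add F_one F_c F_s)
    have a: "in_F d f (0 + (int l - 2) + 0) (?s * (?y ^ l) * ?s - ?s * ysum d l n * ?s)"
      by (rule EQ_rmult[OF EQ_lmult[OF F_s IH] F_s])
    have b: "in_F d f (int l - 2) (?s * ysum d l n * ?s - (\<Sum>j\<in>{1..<n}. Y2 d l (n + 1) j))"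
    proof -
      have "in_F d f (int l - 2) (\<Sum>j\<in>{1..<n}. ?s * Y2 d l n j * ?s - Y2 d l (n + 1) j)"
        by (rule F_sum) (use conj_Y2 nd in auto)
      then show ?thesis unfolding ysum_def by (simp add: sum_subtractf sum_distrib_left sum_distrib_right)
    qed
    have ex: "in_F d f (int l - 2) ((?x + - ?u) ^ l - (?x ^ l + Tsum ?x (- ?u) l))"
      by (rule expand[OF F_x F_uminus[OF F0u]])
    have xn: "eqI d f (?x - ?u) (?s * ?y * ?s)"
    proof -
      have "eqI d f (?x - ?u) (?s * ?y * ?s + ?u - ?u)" by (intro eqI_diff x_next[OF n1 nd] eqI_refl)
      then show ?thesis by simp
    qed
    have xp: "eqI d f ((?x - ?u) ^ l) (?s * ?y ^ l * ?s)"
      by (rule eqI_trans[OF eqI_power[OF xn] conj_pow[OF ss[OF n1 nd]]])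
    have c: "in_F d f (int l - 2) (?x ^ l - (?s * ?y ^ l * ?s + Tsum ?x ?u l))"
    proof -
      have "in_F d f (int l - 2) (- ((?x - ?u) ^ l - (?x ^ l - Tsum ?x ?u l)))"
        using F_uminus[OF ex] by (simp add: Tsum_neg)
      moreover have "in_F d f (int l - 2) ((?x - ?u) ^ l - ?s * ?y ^ l * ?s)"
        by (rule EQ_eqI[OF xp])
      ultimately have "in_F d f (int l - 2) (- ((?x - ?u) ^ l - (?x ^ l - Tsum ?x ?u l)) + ((?x - ?u) ^ l - ?s * ?y ^ l * ?s))"
        by (rule F_add)
      then show ?thesis by (simp add: algebra_simps)
    qed
    have d: "in_F d f (int l - 2) (Tsum ?x ?u l - Y2 d l (n + 1) n)"
      by (rule T_lemma[OF n1 nd hyps(1)])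
    have sumeq: "ysum d l (Suc n) = (\<Sum>j\<in>{1..<n}. Y2 d l (n + 1) j) + Y2 d l (n + 1) n"
    proof -
      have "{1..<Suc n} = insert n {1..<n}" using n1 by auto
      then show ?thesis unfolding ysum_def by (simp add: add.commute)
    qed
    have "in_F d f (int l - 2) (?x ^ l - (?s * ?y ^ l * ?s + Tsum ?x ?u l)
        + ((?s * (?y ^ l) * ?s - ?s * ysum d l n * ?s) + (?s * ysum d l n * ?s - (\<Sum>j\<in>{1..<n}. Y2 d l (n + 1) j)))
        + (Tsum ?x ?u l - Y2 d l (n + 1) n))"
      using a b c d by (intro F_add) auto
    then show ?thesis unfolding sumeq by (simp add: algebra_simps)
  qed
qed

end



theorem mainTheorem7:
  fixes f :: "'r::comm_ring_1 poly" and l d i :: nat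
  assumes "l \<ge> 1" and "d \<ge> 1"
    and "degree f = l" and "lead_coeff f = 1"
    and "\<And>k. coeff f k \<noteq> 0 \<Longrightarrow> even (l + k)"
    and "i \<in> {1..d}"
  shows "in_F d f (int l - 1) ((xh i :: 'r FA) ^ l)
       \<and> in_F d f (int l - 2) ((xh i :: 'r FA) ^ l - y_hat d l i)"
proof -
  have yeq: "y_hat d l i = (ysum d l i :: 'r FA)"
    unfolding y_hat_def ysum_def
  proof (rule sum.cong)
    fix j assume "j \<in> {1..<i}"
    show "A_r_hat d l [i, j] 0 = (Y2 d l i j :: 'r FA)" by (rule A_r_hat2[OF assms(1)])
  qed simp
  have i: "1 \<le> i" "i \<le> d" using assms(6) by auto
  have m: "in_F d f (int l - 2) ((xh i :: 'r FA) ^ l - ysum d l i)"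
    by (rule main_ind[OF assms(1,3,4) assms(5) i])
  have Fy: "in_F d f (int l - 1) (ysum d l i :: 'r FA)"
    unfolding ysum_def by (rule F_sum) (rule F_Y2)
  have "in_F d f (int l - 1) ((xh i :: 'r FA) ^ l - ysum d l i)"
    by (rule F_mono[OF m]) simp
  from F_add[OF this Fy] have "in_F d f (int l - 1) ((xh i :: 'r FA) ^ l)" by simp
  then show ?thesis using m unfolding yeq by simp
qed



end
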